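(* Let $\beta\in\Phi_+$ and write $\beta=r_{i_L}\cdots r_{i_2}(\alpha_{i_1})$ with $i_1,\dots,i_L\in I$ and $L$ minimal among all such expressions (so $r_{i_L}\cdots r_{i_2}$ is a reduced word). For $t\in\{1,\dots,L-1\}$ set $\beta_t=r_{i_L}\cdots r_{i_{t+2}}(\alpha_{i_{t+1}})$ (so $\beta_{L-1}=\alpha_{i_L}$), and for $t\in\{1,\dots,L\}$ set $\gamma_t^\vee=r_{i_t}\cdots r_{i_2}(\alpha_{i_1}^\vee)$ (so $\gamma_1^\vee=\alpha_{i_1}^\vee$, $\gamma_L^\vee=\beta^\vee$). The following are equivalent: (1) $\beta$ is quantum; (2) $\langle\beta^\vee,\beta_t\rangle=1$ for every $t\in\{1,\dots,L-1\}$; (3) for every $t\in\{1,\dots,L\}$, $\gamma_t^\vee=\sum_{k=1}^t\alpha_{i_k}^\vee$, and $\langle\gamma_{t-1}^\vee,\alpha_{i_t}\rangle=-1$ whenever $t\ge2$; (4) $\ell(s_\beta)=2\,\mathrm{ht}(\beta^\vee)-1$.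
   Context: Kac–Moody root datum $(A,X,Y,(\alpha_i)_{i\in I},(\alpha_i^\vee)_{i\in I})$: $A=(a_{i,j})$ generalized Cartan matrix, $X,Y$ free $\mathbb Z$-modules of finite rank with perfect pairing $\langle\cdot,\cdot\rangle:Y\times X\to\mathbb Z$, linearly independent simple roots $(\alpha_i)\subset X$ and simple coroots $(\alpha_i^\vee)\subset Y$ with $\langle\alpha_i^\vee,\alpha_j\rangle=a_{i,j}$. $r_i(x)=x-\langle\alpha_i^\vee,x\rangle\alpha_i$, $r_i(y)=y-\langle y,\alpha_i\rangle\alpha_i^\vee$; $W^v=\langle r_i\rangle$ with length $\ell$. $\Phi=W^v\{\alpha_i\}$, $\Phi_\pm$ as usual; $\beta^\vee=w(\alpha_i^\vee)$ and $s_\beta=wr_iw^{-1}$ for $\beta=w(\alpha_i)$; $\mathrm{ht}(\sum N_i\alpha_i^\vee)=\sum N_i$. $\mathrm{Inv}(w)=\{\alpha\in\Phi_+\mid w\alpha\in\Phi_-\}$. $\beta\in\Phi_+$ is quantum if $\langle\beta^\vee,\gamma\rangle=1$ for all $\gamma\in\mathrm{Inv}(s_\beta)\setminus\{\beta\}$. *)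

theory Defs
  imports Main
begin

text \<open>Coordinates: X = Y = ('n \<Rightarrow> int) with 'n a finite type (free Z-modules of
finite rank, identified with Z^n via dual bases), perfect pairing
<y,x> = sum_j y j * x j.\<close>

type_synonym 'n lat = "'n \<Rightarrow> int"

definition pair :: "('n::finite) lat \<Rightarrow> 'n lat \<Rightarrow> int" where
  "pair y x = (\<Sum>j\<in>UNIV. y j * x j)"

definition lincomb :: "('i::finite \<Rightarrow> int) \<Rightarrow> ('i \<Rightarrow> ('n::finite) lat) \<Rightarrow> 'n lat" where
  "lincomb c v = (\<lambda>j. \<Sum>i\<in>UNIV. c i * v i j)"

definition lin_indep :: "('i::finite \<Rightarrow> ('n::finite) lat) \<Rightarrow> bool" where
  "lin_indep v \<longleftrightarrow> (\<forall>c. lincomb c v = (\<lambda>_. 0) \<longrightarrow> (\<forall>i. c i = 0))"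

definition gen_cartan :: "('i \<Rightarrow> 'i \<Rightarrow> int) \<Rightarrow> bool" where
  "gen_cartan A \<longleftrightarrow> (\<forall>i. A i i = 2) \<and> (\<forall>i j. i \<noteq> j \<longrightarrow> A i j \<le> 0)
     \<and> (\<forall>i j. A i j = 0 \<longleftrightarrow> A j i = 0)"

definition km_datum :: "('i::finite \<Rightarrow> ('n::finite) lat) \<Rightarrow> ('i \<Rightarrow> 'n lat) \<Rightarrow> bool" where
  "km_datum al alv \<longleftrightarrow> gen_cartan (\<lambda>i j. pair (alv i) (al j)) \<and> lin_indep al \<and> lin_indep alv"

definition rX :: "('i \<Rightarrow> ('n::finite) lat) \<Rightarrow> ('i \<Rightarrow> 'n lat) \<Rightarrow> 'i \<Rightarrow> 'n lat \<Rightarrow> 'n lat" where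
  "rX al alv i x = (\<lambda>j. x j - pair (alv i) x * al i j)"

definition rY :: "('i \<Rightarrow> ('n::finite) lat) \<Rightarrow> ('i \<Rightarrow> 'n lat) \<Rightarrow> 'i \<Rightarrow> 'n lat \<Rightarrow> 'n lat" where
  "rY al alv i y = (\<lambda>j. y j - pair y (al i) * alv i j)"

text \<open>Action of the word [j1,...,jm] = r_{jm} ... r_{j1} (first list element applied first).\<close>
definition actX :: "('i \<Rightarrow> ('n::finite) lat) \<Rightarrow> ('i \<Rightarrow> 'n lat) \<Rightarrow> 'i list \<Rightarrow> 'n lat \<Rightarrow> 'n lat" where
  "actX al alv ws = fold (rX al alv) ws"

definition actY :: "('i \<Rightarrow> ('n::finite) lat) \<Rightarrow> ('i \<Rightarrow> 'n lat) \<Rightarrow> 'i list \<Rightarrow> 'n lat \<Rightarrow> 'n lat" where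
  "actY al alv ws = fold (rY al alv) ws"

definition weyl :: "('i \<Rightarrow> ('n::finite) lat) \<Rightarrow> ('i \<Rightarrow> 'n lat) \<Rightarrow> ('n lat \<Rightarrow> 'n lat) set" where
  "weyl al alv = {actX al alv ws | ws. True}"

definition wlen :: "('i \<Rightarrow> ('n::finite) lat) \<Rightarrow> ('i \<Rightarrow> 'n lat) \<Rightarrow> ('n lat \<Rightarrow> 'n lat) \<Rightarrow> nat" where
  "wlen al alv w = (LEAST m. \<exists>ws. length ws = m \<and> actX al alv ws = w)"

definition roots :: "('i \<Rightarrow> ('n::finite) lat) \<Rightarrow> ('i \<Rightarrow> 'n lat) \<Rightarrow> 'n lat set" where
  "roots al alv = {actX al alv ws (al i) | ws i. True}"

definition pos_roots :: "('i::finite \<Rightarrow> ('n::finite) lat) \<Rightarrow> ('i \<Rightarrow> 'n lat) \<Rightarrow> 'n lat set" where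
  "pos_roots al alv = {b \<in> roots al alv. \<exists>c. (\<forall>i. 0 \<le> c i) \<and> b = lincomb c al}"

definition neg_roots :: "('i::finite \<Rightarrow> ('n::finite) lat) \<Rightarrow> ('i \<Rightarrow> 'n lat) \<Rightarrow> 'n lat set" where
  "neg_roots al alv = {b \<in> roots al alv. \<exists>c. (\<forall>i. c i \<le> 0) \<and> b = lincomb c al}"

definition coroot :: "('i \<Rightarrow> ('n::finite) lat) \<Rightarrow> ('i \<Rightarrow> 'n lat) \<Rightarrow> 'n lat \<Rightarrow> 'n lat" where
  "coroot al alv b = (SOME c. \<exists>ws i. actX al alv ws (al i) = b \<and> c = actY al alv ws (alv i))"

definition sref :: "('i \<Rightarrow> ('n::finite) lat) \<Rightarrow> ('i \<Rightarrow> 'n lat) \<Rightarrow> 'n lat \<Rightarrow> ('n lat \<Rightarrow> 'n lat)" where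
  "sref al alv b = (SOME f. \<exists>ws i. actX al alv ws (al i) = b \<and>
      f = actX al alv ws \<circ> rX al alv i \<circ> actX al alv (rev ws))"

definition Inv :: "('i::finite \<Rightarrow> ('n::finite) lat) \<Rightarrow> ('i \<Rightarrow> 'n lat) \<Rightarrow> ('n lat \<Rightarrow> 'n lat) \<Rightarrow> 'n lat set" where
  "Inv al alv w = {a \<in> pos_roots al alv. w a \<in> neg_roots al alv}"

definition quantum :: "('i::finite \<Rightarrow> ('n::finite) lat) \<Rightarrow> ('i \<Rightarrow> 'n lat) \<Rightarrow> 'n lat \<Rightarrow> bool" where
  "quantum al alv b \<longleftrightarrow> b \<in> pos_roots al alv \<and>
     (\<forall>g \<in> Inv al alv (sref al alv b) - {b}. pair (coroot al alv b) g = 1)"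

definition ht :: "('i::finite \<Rightarrow> ('n::finite) lat) \<Rightarrow> 'n lat \<Rightarrow> int" where
  "ht alv y = (\<Sum>i\<in>UNIV. (THE N. y = lincomb N alv) i)"

end

theory Submission
  imports Defs
begin


lemma pair_sym: "pair y x = pair x y"
  unfolding pair_def by (simp add: mult.commute)

lemma pair_diff: "pair y (\<lambda>j. p j - c * q j) = pair y p - c * pair y q"
  unfolding pair_def by (simp add: algebra_simps sum_subtractf sum_distrib_left)

lemma pair_diff_left: "pair (\<lambda>j. p j - c * q j) y = pair p y - c * pair q y"
  unfolding pair_def by (simp add: algebra_simps sum_subtractf sum_distrib_left)

lemma pair_lin: "pair y (\<lambda>j. a * p j + b * q j) = a * pair y p + b * pair y q"
  unfolding pair_def by (simp add: algebra_simps sum.distrib sum_distrib_left)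

lemma pair_lin_left: "pair (\<lambda>j. a * p j + b * q j) y = a * pair p y + b * pair q y"
  unfolding pair_def by (simp add: algebra_simps sum.distrib sum_distrib_left)

lemma pair_neg: "pair y (\<lambda>j. - p j) = - pair y p"
  unfolding pair_def by (simp add: sum_negf)

lemma pair_neg_left: "pair (\<lambda>j. - p j) y = - pair p y"
  unfolding pair_def by (simp add: sum_negf)

lemma rY_is_rX: "rY al alv = rX alv al"
  by (intro ext) (simp add: rY_def rX_def pair_sym)

lemma actY_is_actX: "actY al alv = actX alv al"
  by (intro ext) (simp add: actY_def actX_def rY_is_rX)

lemma actX_Nil[simp]: "actX al alv [] x = x" by (simp add: actX_def)
lemma actX_Cons[simp]: "actX al alv (i # ws) x = actX al alv ws (rX al alv i x)"
  by (simp add: actX_def)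
lemma actX_append: "actX al alv (xs @ ys) x = actX al alv ys (actX al alv xs x)"
  by (simp add: actX_def)
lemma actX_snoc: "actX al alv (xs @ [i]) x = rX al alv i (actX al alv xs x)"
  by (simp add: actX_def)

lemma rX_lin: "rX al alv i (\<lambda>j. a * p j + b * q j) = (\<lambda>j. a * rX al alv i p j + b * rX al alv i q j)"
  by (intro ext) (simp add: rX_def pair_lin algebra_simps)

lemma actX_lin: "actX al alv ws (\<lambda>j. a * p j + b * q j) = (\<lambda>j. a * actX al alv ws p j + b * actX al alv ws q j)"
  by (induction ws arbitrary: p q) (simp_all add: rX_lin)

lemma actX_neg: "actX al alv ws (\<lambda>j. - p j) = (\<lambda>j. - actX al alv ws p j)"
proof -
  have "actX al alv ws (\<lambda>j. (-1) * p j + 0 * p j) = (\<lambda>j. (-1) * actX al alv ws p j + 0 * actX al alv ws p j)"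
    by (rule actX_lin)
  then show ?thesis by simp
qed

lemma actX_diff: "actX al alv ws (\<lambda>j. p j - c * q j) = (\<lambda>j. actX al alv ws p j - c * actX al alv ws q j)"
proof -
  have "actX al alv ws (\<lambda>j. 1 * p j + (-c) * q j) = (\<lambda>j. 1 * actX al alv ws p j + (-c) * actX al alv ws q j)"
    by (rule actX_lin)
  then show ?thesis by simp
qed

lemma rX_rX:
  assumes "pair (alv i) (al i) = 2"
  shows "rX al alv i (rX al alv i x) = x"
proof (intro ext)
  fix j
  have "pair (alv i) (rX al alv i x) = pair (alv i) x - pair (alv i) x * pair (alv i) (al i)"
    unfolding rX_def by (rule pair_diff)
  then show "rX al alv i (rX al alv i x) j = x j" using assms by (simp add: rX_def algebra_simps)
qed

lemma rX_al:
  assumes "pair (alv i) (al i) = 2"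
  shows "rX al alv i (al i) = (\<lambda>j. - al i j)"
  using assms by (intro ext) (simp add: rX_def)

lemma pair_rY_rX:
  assumes "pair (alv i) (al i) = 2"
  shows "pair (rY al alv i y) (rX al alv i x) = pair y x"
proof -
  have A: "pair (rY al alv i y) (rX al alv i x) = pair y (rX al alv i x) - pair y (al i) * pair (alv i) (rX al alv i x)"
    unfolding rY_def by (rule pair_diff_left)
  have B: "pair y (rX al alv i x) = pair y x - pair (alv i) x * pair y (al i)"
    unfolding rX_def by (rule pair_diff)
  have C: "pair (alv i) (rX al alv i x) = pair (alv i) x - pair (alv i) x * pair (alv i) (al i)"
    unfolding rX_def by (rule pair_diff)
  show ?thesis unfolding A B C assms by (simp add: algebra_simps)
qed

lemma pair_act:
  assumes "\<And>i. pair (alv i) (al i) = 2"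
  shows "pair (actY al alv ws y) (actX al alv ws x) = pair y x"
proof (induction ws arbitrary: x y)
  case Nil then show ?case by (simp add: actY_def)
next
  case (Cons a ws)
  have "pair (actY al alv (a # ws) y) (actX al alv (a # ws) x) = pair (actY al alv ws (rY al alv a y)) (actX al alv ws (rX al alv a x))"
    by (simp add: actY_def)
  also have "\<dots> = pair (rY al alv a y) (rX al alv a x)" by (rule Cons.IH)
  also have "\<dots> = pair y x" by (rule pair_rY_rX[OF assms])
  finally show ?case .
qed



definition nnc :: "('i::finite \<Rightarrow> ('n::finite) lat) \<Rightarrow> 'n lat \<Rightarrow> bool" where
  "nnc v x \<longleftrightarrow> (\<exists>c. (\<forall>i. 0 \<le> c i) \<and> x = lincomb c v)"

lemma lincomb_diff: "lincomb (\<lambda>i. c i - d i) v = (\<lambda>j. lincomb c v j - lincomb d v j)"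
  unfolding lincomb_def by (intro ext) (simp add: algebra_simps sum_subtractf)

lemma lincomb_add: "lincomb (\<lambda>i. c i + d i) v = (\<lambda>j. lincomb c v j + lincomb d v j)"
  unfolding lincomb_def by (intro ext) (simp add: algebra_simps sum.distrib)

lemma lincomb_smult: "lincomb (\<lambda>i. a * c i) v = (\<lambda>j. a * lincomb c v j)"
  unfolding lincomb_def by (intro ext) (simp add: algebra_simps sum_distrib_left)

lemma lincomb_unique:
  assumes "lin_indep v" "lincomb c v = lincomb d v"
  shows "c = d"
proof -
  have "lincomb (\<lambda>i. c i - d i) v = (\<lambda>_. 0)" using assms(2) by (simp add: lincomb_diff)
  then have "\<forall>i. c i - d i = 0" using assms(1) unfolding lin_indep_def by blast
  then show ?thesis by auto
qed

lemma lincomb_delta2: "lincomb (\<lambda>k. if k = i then a else 0) v = (\<lambda>j. a * v i j)"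
proof (intro ext)
  fix j
  have "(\<Sum>k\<in>UNIV. (if k = i then a else 0) * v k j) = (\<Sum>k\<in>UNIV. if k = i then a * v i j else 0)"
    by (rule sum.cong) auto
  then show "lincomb (\<lambda>k. if k = i then a else 0) v j = a * v i j"
    unfolding lincomb_def by simp
qed

lemma lincomb_delta: "lincomb (\<lambda>k. if k = i then 1 else 0) v = v i"
  using lincomb_delta2[of i 1 v] by simp

lemma rX_lincomb:
  "rX al alv k (lincomb c al) = lincomb (\<lambda>i. c i - (if i = k then pair (alv k) (lincomb c al) else 0)) al"
proof -
  have "lincomb (\<lambda>i. c i - (if i = k then pair (alv k) (lincomb c al) else 0)) al
      = (\<lambda>j. lincomb c al j - lincomb (\<lambda>i. if i = k then pair (alv k) (lincomb c al) else 0) al j)"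
    by (rule lincomb_diff)
  then show ?thesis by (simp add: lincomb_delta2 rX_def mult.commute)
qed

lemma actX_lincomb: "\<exists>d. actX al alv ws (lincomb c al) = lincomb d al"
proof (induction ws arbitrary: c)
  case Nil then show ?case by auto
next
  case (Cons a ws) then show ?case by (simp add: rX_lincomb)
qed

lemma rX_zero: "rX al alv i (\<lambda>_. 0) = (\<lambda>_. 0)"
  by (simp add: rX_def pair_def)

lemma actX_zero: "actX al alv ws (\<lambda>_. 0) = (\<lambda>_. 0)"
  by (induction ws) (simp_all add: rX_zero)

locale kmd =
  fixes al :: "'i::finite \<Rightarrow> ('n::finite) lat" and alv :: "'i \<Rightarrow> 'n lat"
  assumes km: "km_datum al alv"
begin

lemma two[simp]: "pair (alv i) (al i) = 2"
  using km unfolding km_datum_def gen_cartan_def by auto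

lemma offdiag: "i \<noteq> j \<Longrightarrow> pair (alv i) (al j) \<le> 0"
  using km unfolding km_datum_def gen_cartan_def by auto

lemma zerosym: "pair (alv i) (al j) = 0 \<longleftrightarrow> pair (alv j) (al i) = 0"
  using km unfolding km_datum_def gen_cartan_def by auto

lemma li: "lin_indep al" using km unfolding km_datum_def by auto
lemma liv: "lin_indep alv" using km unfolding km_datum_def by auto

lemma dual: "kmd alv al"
proof -
  have "gen_cartan (\<lambda>i j. pair (al i) (alv j))"
    unfolding gen_cartan_def pair_sym[of "al _"] using zerosym offdiag by auto
  then show ?thesis unfolding kmd_def km_datum_def using li liv by auto
qed

lemma rr[simp]: "rX al alv i (rX al alv i x) = x" by (rule rX_rX) simp

lemma act_rev1[simp]: "actX al alv (rev ws) (actX al alv ws x) = x"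
  by (induction ws arbitrary: x) (simp_all add: actX_snoc)

lemma act_rev2[simp]: "actX al alv ws (actX al alv (rev ws) x) = x"
  by (induction ws arbitrary: x) (simp_all add: actX_snoc)

lemma act_inj: "actX al alv ws x = actX al alv ws y \<Longrightarrow> x = y"
proof -
  assume "actX al alv ws x = actX al alv ws y"
  then have "actX al alv (rev ws) (actX al alv ws x) = actX al alv (rev ws) (actX al alv ws y)" by simp
  then show ?thesis by simp
qed

lemma pact: "pair (actY al alv ws y) (actX al alv ws x) = pair y x"
  by (rule pair_act) simp

lemma al_nz: "al i \<noteq> (\<lambda>_. 0)"
proof
  assume "al i = (\<lambda>_. 0)"
  then have "lincomb (\<lambda>k. if k = i then 1 else 0) al = (\<lambda>_. 0)" by (simp add: lincomb_delta)
  then have "\<forall>k. (if k = i then 1 else 0) = (0::int)" using li unfolding lin_indep_def by blast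
  then have "(1::int) = 0" by (metis (full_types))
  then show False by simp
qed

lemma act_nz: "actX al alv ws (al i) \<noteq> (\<lambda>_. 0)"
proof
  assume "actX al alv ws (al i) = (\<lambda>_. 0)"
  moreover have "actX al alv ws (\<lambda>_. 0) = (\<lambda>_. 0)" by (rule actX_zero)
  ultimately have "al i = (\<lambda>_. 0)" using act_inj by metis
  then show False using al_nz by blast
qed

lemma roots_lincomb: "\<exists>d. actX al alv ws (al i) = lincomb d al"
  using actX_lincomb[of al alv ws "\<lambda>k. if k = i then 1 else 0"] by (simp add: lincomb_delta)

lemma rootsI: "x = actX al alv ws (al i) \<Longrightarrow> x \<in> roots al alv"
  unfolding roots_def by blast

lemma roots_neg: "r \<in> roots al alv \<Longrightarrow> (\<lambda>j. - r j) \<in> roots al alv"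
proof -
  assume "r \<in> roots al alv"
  then obtain ws i where r: "r = actX al alv ws (al i)" unfolding roots_def by auto
  have "actX al alv (i # ws) (al i) = (\<lambda>j. - r j)"
    by (simp add: r rX_al actX_neg)
  then show ?thesis by (metis rootsI)
qed

lemma roots_act: "r \<in> roots al alv \<Longrightarrow> actX al alv ws r \<in> roots al alv"
proof -
  assume "r \<in> roots al alv"
  then obtain ws' i where r: "r = actX al alv ws' (al i)" unfolding roots_def by auto
  have "actX al alv (ws' @ ws) (al i) = actX al alv ws r" by (simp add: r actX_append)
  then show ?thesis by (metis rootsI)
qed

lemma roots_nz: "r \<in> roots al alv \<Longrightarrow> r \<noteq> (\<lambda>_. 0)"
  unfolding roots_def using act_nz by auto

lemma al_root: "al i \<in> roots al alv"
  unfolding roots_def by (rule CollectI, rule exI[of _ "[]"]) auto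

lemma nn_both: "nnc al x \<Longrightarrow> nnc al (\<lambda>j. - x j) \<Longrightarrow> x = (\<lambda>_. 0)"
proof -
  assume "nnc al x" "nnc al (\<lambda>j. - x j)"
  then obtain c d where c: "\<forall>i. 0 \<le> c i" "x = lincomb c al" and d: "\<forall>i. 0 \<le> d i" "(\<lambda>j. - x j) = lincomb d al"
    unfolding nnc_def by auto
  have "lincomb (\<lambda>i. c i + d i) al = (\<lambda>_. 0)"
    by (simp add: lincomb_add flip: c(2) d(2))
  then have "\<forall>i. c i + d i = 0" using li unfolding lin_indep_def by blast
  then have "\<forall>i. c i = 0" using c(1) d(1) by (smt (verit))
  then have "c = (\<lambda>_. 0)" by auto
  then show ?thesis using c(2) unfolding lincomb_def by auto
qed

lemma pos_roots_iff: "x \<in> pos_roots al alv \<longleftrightarrow> x \<in> roots al alv \<and> nnc al x"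
  unfolding pos_roots_def nnc_def by auto

lemma neg_roots_iff: "x \<in> neg_roots al alv \<longleftrightarrow> x \<in> roots al alv \<and> nnc al (\<lambda>j. - x j)"
proof -
  have "(\<exists>c. (\<forall>i. c i \<le> 0) \<and> x = lincomb c al) \<longleftrightarrow> nnc al (\<lambda>j. - x j)"
  proof
    assume "\<exists>c. (\<forall>i. c i \<le> 0) \<and> x = lincomb c al"
    then obtain c where "\<forall>i. c i \<le> 0" "x = lincomb c al" by auto
    then show "nnc al (\<lambda>j. - x j)" unfolding nnc_def
      by (intro exI[of _ "\<lambda>i. - c i"]) (auto simp: lincomb_def sum_negf)
  next
    assume "nnc al (\<lambda>j. - x j)"
    then obtain c where "\<forall>i. 0 \<le> c i" "(\<lambda>j. - x j) = lincomb c al" unfolding nnc_def by auto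
    have "x = (\<lambda>j. - (- x j))" by simp
    also have "\<dots> = (\<lambda>j. - lincomb c al j)" using \<open>(\<lambda>j. - x j) = lincomb c al\<close> by metis
    also have "\<dots> = lincomb (\<lambda>i. - c i) al" by (auto simp: lincomb_def sum_negf)
    finally have "x = lincomb (\<lambda>i. - c i) al" .
    then show "\<exists>c. (\<forall>i. c i \<le> 0) \<and> x = lincomb c al" using \<open>\<forall>i. 0 \<le> c i\<close>
      by (intro exI[of _ "\<lambda>i. - c i"]) auto
  qed
  then show ?thesis unfolding neg_roots_def by auto
qed

lemma root_mult:
  assumes "r \<in> roots al alv" "r = (\<lambda>j. c * al k j)"
  shows "c = 1 \<or> c = -1"
proof -
  obtain ws m where r: "r = actX al alv ws (al m)" using assms(1) unfolding roots_def by auto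
  obtain d where d: "actX al alv (rev ws) (al k) = lincomb d al" using roots_lincomb by blast
  have "al m = actX al alv (rev ws) r" by (simp add: r)
  also have "\<dots> = actX al alv (rev ws) (\<lambda>j. c * al k j + 0 * al k j)" using assms(2) by simp
  also have "\<dots> = (\<lambda>j. c * lincomb d al j)" by (simp only: actX_lin d) simp
  also have "\<dots> = lincomb (\<lambda>i. c * d i) al" by (simp add: lincomb_smult)
  finally have "lincomb (\<lambda>i. if i = m then 1 else 0) al = lincomb (\<lambda>i. c * d i) al"
    by (simp add: lincomb_delta)
  then have "(\<lambda>i. if i = m then 1 else 0) = (\<lambda>i. c * d i)" using lincomb_unique li by blast
  then have "c * d m = 1" by (metis (mono_tags))
  then show ?thesis unfolding zmult_eq_1_iff by blast
qed

end


fun alt :: "'a \<Rightarrow> 'a \<Rightarrow> nat \<Rightarrow> 'a list" where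
  "alt a b 0 = []"
| "alt a b (Suc n) = a # alt b a n"

lemma alt_snoc: "alt a b (Suc n) = alt a b n @ [if even n then a else b]"
  by (induction n arbitrary: a b) auto

lemma length_alt[simp]: "length (alt a b n) = n"
  by (induction n arbitrary: a b) auto

lemma set_alt: "set (alt a b n) \<subseteq> {a, b}"
  by (induction n arbitrary: a b) auto

lemma alt_add: "alt a b (m + k) = alt a b m @ alt (if even m then a else b) (if even m then b else a) k"
  by (induction m arbitrary: a b) auto

lemma alt_char:
  assumes "set q \<subseteq> {a, b}" "a \<noteq> b" "\<forall>k. Suc k < length q \<longrightarrow> q ! k \<noteq> q ! Suc k"
    "q \<noteq> [] \<longrightarrow> hd q = a"
  shows "q = alt a b (length q)"
  using assms
proof (induction q arbitrary: a b)
  case Nil then show ?case by simp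
next
  case (Cons c q)
  then have c: "c = a" by simp
  show ?case
  proof (cases q)
    case Nil then show ?thesis using c by simp
  next
    case (Cons d q')
    have "d \<noteq> c" using Cons.prems(3) \<open>q = d # q'\<close> by (metis length_Cons nth_Cons_0 nth_Cons_Suc zero_less_Suc Suc_less_eq)
    then have "d = b" using Cons.prems(1) c \<open>q = d # q'\<close> by auto
    have "q = alt b a (length q)"
    proof (rule Cons.IH)
      show "set q \<subseteq> {b, a}" using Cons.prems(1) by auto
      show "b \<noteq> a" using Cons.prems(2) by auto
      show "\<forall>k. Suc k < length q \<longrightarrow> q ! k \<noteq> q ! Suc k"
      proof (intro allI impI)
        fix k assume "Suc k < length q"
        then have "Suc (Suc k) < length (c # q)" by simp
        then have "(c # q) ! Suc k \<noteq> (c # q) ! Suc (Suc k)" using Cons.prems(3) by blast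
        then show "q ! k \<noteq> q ! Suc k" by simp
      qed
      show "q \<noteq> [] \<longrightarrow> hd q = b" using \<open>q = d # q'\<close> \<open>d = b\<close> by simp
    qed
    then show ?thesis using c by simp
  qed
qed

fun cs :: "int \<Rightarrow> int \<Rightarrow> nat \<Rightarrow> int \<times> int" where
  "cs a b 0 = (1, 0)"
| "cs a b (Suc n) = (if even n then (fst (cs a b n), b * fst (cs a b n) - snd (cs a b n))
                     else (- fst (cs a b n) + a * snd (cs a b n), snd (cs a b n)))"

lemma cs_inv1: "fst (cs a b n) = fst (cs b a n) \<and> a * snd (cs a b n) = b * snd (cs b a n)"
  by (induction n) (auto simp: algebra_simps)

lemma cs_zero: "snd (cs 0 0 n) = 0"
  by (induction n) auto

lemma cs_Q: "b * fst (cs a b n) ^ 2 - a * b * fst (cs a b n) * snd (cs a b n) + a * snd (cs a b n) ^ 2 = b"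
proof (induction n)
  case 0 then show ?case by simp
next
  case (Suc n)
  then show ?case by (auto simp: power2_eq_square algebra_simps)
qed

lemma mixed_impossible:
  fixes a b x y :: int
  assumes "a > 0" "b > 0" "b * x ^ 2 - a * b * x * y + a * y ^ 2 = b" "x * y < 0"
  shows False
proof -
  have "x \<noteq> 0" "y \<noteq> 0" using assms(4) by auto
  then have "x ^ 2 \<ge> 1" "y ^ 2 \<ge> 1" by (simp_all add: power2_eq_square) (smt (verit) mult_le_cancel_left1 zero_less_mult_iff)+
  then have "b * x ^ 2 \<ge> b" "a * y ^ 2 > 0" using assms(1,2)
    by (simp_all add: mult_le_cancel_left1) (smt (verit) mult_pos_pos)
  moreover have "a * b * (x * y) < 0" using assms(1,2,4) by (simp add: mult_pos_neg)
  ultimately show False using assms(3) by (smt (verit) mult.assoc)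
qed

lemma cs_nomix:
  assumes "0 \<le> a" "0 \<le> b" "a = 0 \<longleftrightarrow> b = 0"
  shows "\<not> (fst (cs a b n) * snd (cs a b n) < 0)"
proof (cases "a = 0")
  case True then have "b = 0" using assms by simp
  then show ?thesis using True cs_zero by simp
next
  case False then have "a > 0" "b > 0" using assms by auto
  then show ?thesis using mixed_impossible[OF _ _ cs_Q] by blast
qed



lemma wlen_le: "wlen al alv (actX al alv ws) \<le> length ws"
  unfolding wlen_def by (rule Least_le) blast

lemma wlen_ex: "\<exists>ws'. length ws' = wlen al alv (actX al alv ws) \<and> actX al alv ws' = actX al alv ws"
  unfolding wlen_def by (rule LeastI_ex) blast

context kmd begin

lemma act_cancel: "actX al alv (xs @ c # c # ys) = actX al alv (xs @ ys)"
  by (intro ext) (simp add: actX_append)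

lemma cs_act:
  fixes s s' :: 'i
  defines "a \<equiv> - pair (alv s) (al s')" and "b \<equiv> - pair (alv s') (al s)"
  shows "actX al alv (alt s' s n) (al s) = (\<lambda>j. fst (cs a b n) * al s j + snd (cs a b n) * al s' j)"
proof (induction n)
  case 0 then show ?case by simp
next
  case (Suc n)
  define x where "x = fst (cs a b n)"
  define y where "y = snd (cs a b n)"
  define t where "t = (if even n then s' else s)"
  have "actX al alv (alt s' s (Suc n)) (al s) = rX al alv t (\<lambda>j. x * al s j + y * al s' j)"
    unfolding alt_snoc actX_snoc Suc.IH x_def y_def t_def by simp
  also have "\<dots> = (\<lambda>j. x * rX al alv t (al s) j + y * rX al alv t (al s') j)" by (rule rX_lin)
  also have "\<dots> = (\<lambda>j. fst (cs a b (Suc n)) * al s j + snd (cs a b (Suc n)) * al s' j)"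
    by (intro ext) (auto simp: t_def x_def y_def a_def b_def rX_def algebra_simps)
  finally show ?case .
qed

lemma act_formula:
  "actX al alv (rev ws @ [i] @ ws) z = (\<lambda>j. z j - pair (actY al alv ws (alv i)) z * actX al alv ws (al i) j)"
proof -
  define u where "u = actX al alv (rev ws) z"
  have "actX al alv (rev ws @ [i] @ ws) z = actX al alv ws (rX al alv i u)"
    by (simp add: actX_append u_def)
  also have "\<dots> = (\<lambda>j. actX al alv ws u j - pair (alv i) u * actX al alv ws (al i) j)"
    unfolding rX_def by (rule actX_diff)
  also have "pair (alv i) u = pair (actY al alv ws (alv i)) z"
    using pact[of ws "alv i" u] by (simp add: u_def)
  finally show ?thesis by (simp add: u_def)
qed

lemma rank2:
  assumes ss: "s \<noteq> s'" and qset: "set q \<subseteq> {s, s'}"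
    and min1: "\<forall>q'. set q' \<subseteq> {s, s'} \<longrightarrow> actX al alv q' = actX al alv q \<longrightarrow> length q \<le> length q'"
    and min2: "\<forall>q'. set q' \<subseteq> {s, s'} \<longrightarrow> actX al alv q' = actX al alv (s # q) \<longrightarrow> length q \<le> length q'"
  shows "\<exists>x y. 0 \<le> x \<and> 0 \<le> y \<and> actX al alv q (al s) = (\<lambda>j. x * al s j + y * al s' j)"
proof -
  define a where "a = - pair (alv s) (al s')"
  define b where "b = - pair (alv s') (al s)"
  have a0: "0 \<le> a" using offdiag[OF ss] by (simp add: a_def)
  have b0: "0 \<le> b" using offdiag[of s' s] ss by (simp add: b_def)
  have ab: "a = 0 \<longleftrightarrow> b = 0" using zerosym[of s s'] by (simp add: a_def b_def)
  have nomix: "\<And>n. \<not> (fst (cs a b n) * snd (cs a b n) < 0)" by (rule cs_nomix[OF a0 b0 ab])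
  have noadj: "\<forall>k. Suc k < length q \<longrightarrow> q ! k \<noteq> q ! Suc k"
  proof (intro allI impI notI)
    fix k assume k: "Suc k < length q" and eq: "q ! k = q ! Suc k"
    define q' where "q' = take k q @ drop (Suc (Suc k)) q"
    have "q = take k q @ q ! k # q ! Suc k # drop (Suc (Suc k)) q"
      using k by (metis Cons_nth_drop_Suc Suc_lessD append_take_drop_id)
    then have "actX al alv q = actX al alv q'" unfolding q'_def using eq by (metis act_cancel)
    moreover have "set q' \<subseteq> {s, s'}" using qset unfolding q'_def
      by (auto dest!: in_set_takeD in_set_dropD)
    moreover have "length q' < length q" using k by (simp add: q'_def)
    ultimately show False using min1 by fastforce
  qed
  have hdq: "q \<noteq> [] \<longrightarrow> hd q = s'"
  proof
    assume "q \<noteq> []"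
    then obtain c q'' where q: "q = c # q''" by (cases q) auto
    have "c \<noteq> s"
    proof
      assume "c = s"
      then have "actX al alv (s # q) = actX al alv q''" using q act_cancel[of "[]" s q''] by simp
      moreover have "set q'' \<subseteq> {s, s'}" using qset q by auto
      ultimately show False using min2 q by fastforce
    qed
    then show "hd q = s'" using qset q by auto
  qed
  have qalt: "q = alt s' s (length q)"
    by (rule alt_char) (use qset ss noadj hdq in auto)
  define k where "k = length q"
  have qk: "actX al alv q (al s) = (\<lambda>j. fst (cs a b k) * al s j + snd (cs a b k) * al s' j)"
    using cs_act[of s' s k] qalt by (simp add: a_def b_def k_def)
  have "0 \<le> fst (cs a b k) \<and> 0 \<le> snd (cs a b k)"
  proof (rule ccontr)
    assume neg: "\<not> (0 \<le> fst (cs a b k) \<and> 0 \<le> snd (cs a b k))"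
    define P where "P = (\<lambda>n. \<not> (0 \<le> fst (cs a b n) \<and> 0 \<le> snd (cs a b n)))"
    define m0 where "m0 = (LEAST n. P n)"
    have Pm0: "P m0" unfolding m0_def by (rule LeastI[of P k]) (use neg P_def in simp)
    have m0k: "m0 \<le> k" unfolding m0_def by (rule Least_le) (use neg P_def in simp)
    have "m0 \<noteq> 0"
    proof
      assume "m0 = 0" then show False using Pm0 by (simp add: P_def)
    qed
    then obtain m where m: "m0 = Suc m" by (cases m0) auto
    have Pm: "\<not> P m" unfolding m0_def using m m0_def not_less_Least by (metis lessI)
    define x where "x = fst (cs a b m)"
    define y where "y = snd (cs a b m)"
    define t where "t = (if even m then s' else s)"
    define w where "w = alt s' s m"
    have x0: "0 \<le> x" and y0: "0 \<le> y" using Pm by (auto simp: P_def x_def y_def)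
    have wroot: "actX al alv w (al s) = (\<lambda>j. x * al s j + y * al s' j)"
      using cs_act[of s' s m] by (simp add: a_def b_def w_def x_def y_def)
    have wroot_t: "actX al alv w (al s) = al t \<and> (t = s \<longrightarrow> x = 1 \<and> y = 0) \<and> (t = s' \<longrightarrow> x = 0 \<and> y = 1)"
    proof (cases "even m")
      case True
      then have t: "t = s'" by (simp add: t_def)
      have Psm: "P (Suc m)" using Pm0 m by simp
      have "b * x - y < 0" using Psm True x0 by (auto simp: P_def x_def y_def)
      moreover have "\<not> (x * (b * x - y) < 0)" using nomix[of "Suc m"] True by (simp add: x_def y_def)
      ultimately have "x = 0" using x0 by (smt (verit) mult_pos_neg)
      then have "y > 0" using \<open>b * x - y < 0\<close> by simp
      have r: "actX al alv w (al s) = (\<lambda>j. y * al s' j)" using wroot \<open>x = 0\<close> by simp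
      have "actX al alv w (al s) \<in> roots al alv" by (rule rootsI) simp
      then have "y = 1 \<or> y = -1" using root_mult r by blast
      then have "y = 1" using \<open>y > 0\<close> by simp
      then show ?thesis using r t \<open>x = 0\<close> ss by simp
    next
      case False
      then have t: "t = s" by (simp add: t_def)
      have Psm: "P (Suc m)" using Pm0 m by simp
      have "- x + a * y < 0" using Psm False y0 by (auto simp: P_def x_def y_def)
      moreover have "\<not> ((- x + a * y) * y < 0)" using nomix[of "Suc m"] False by (simp add: x_def y_def)
      ultimately have "y = 0" using y0 by (smt (verit) mult_neg_pos)
      then have "x > 0" using \<open>- x + a * y < 0\<close> by simp
      have r: "actX al alv w (al s) = (\<lambda>j. x * al s j)" using wroot \<open>y = 0\<close> by simp
      have "actX al alv w (al s) \<in> roots al alv" by (rule rootsI) simp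
      then have "x = 1 \<or> x = -1" using root_mult r by blast
      then have "x = 1" using \<open>x > 0\<close> by simp
      then show ?thesis using r t \<open>y = 0\<close> ss by simp
    qed
    have dual_act: "actY al alv w (alv s) = (\<lambda>j. fst (cs b a m) * alv s j + snd (cs b a m) * alv s' j)"
      using kmd.cs_act[OF dual, of s' s m] by (simp add: actY_is_actX a_def b_def w_def pair_sym)
    have inv1: "fst (cs a b m) = fst (cs b a m)" "a * snd (cs a b m) = b * snd (cs b a m)"
      using cs_inv1 by blast+
    have corootw: "actY al alv w (alv s) = alv t"
    proof (cases "t = s")
      case True
      then have "x = 1" "y = 0" using wroot_t by auto
      have "snd (cs b a m) = 0"
      proof (cases "b = 0")
        case True
        then have "a = 0" using ab by simp
        then show ?thesis using True cs_zero by simp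
      next
        case False
        then show ?thesis using inv1(2) \<open>y = 0\<close> by (simp add: y_def)
      qed
      moreover have "fst (cs b a m) = 1" using inv1(1) \<open>x = 1\<close> by (simp add: x_def)
      ultimately show ?thesis using dual_act True by simp
    next
      case False
      then have ts: "t = s'" by (simp add: t_def split: if_splits)
      then have "x = 0" "y = 1" using wroot_t ss by auto
      then have f0: "fst (cs b a m) = 0" using inv1(1) by (simp add: x_def)
      define d where "d = snd (cs b a m)"
      have yw: "actY al alv w (alv s) = (\<lambda>j. d * alv s' j)" using dual_act f0 by (simp add: d_def)
      have "pair (actY al alv w (alv s)) (actX al alv w (al s)) = 2" by (simp add: pact)
      then have "pair (\<lambda>j. d * alv s' j + 0 * alv s' j) (al s') = 2"
        using yw wroot_t ts by simp
      then have "d * 2 = 2" by (simp only: pair_lin_left) simp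
      then have "d = 1" by simp
      then show ?thesis using yw ts by simp
    qed
    have refl_t: "actX al alv (rev w @ [s] @ w) = rX al alv t"
    proof (rule ext)
      fix z
      have "actX al alv w (al s) = al t" using wroot_t by blast
      then show "actX al alv (rev w @ [s] @ w) z = rX al alv t z"
        unfolding act_formula corootw by (simp add: rX_def)
    qed
    have braid: "actX al alv (alt s' s (Suc m)) = actX al alv (s # w)"
    proof (rule ext)
      fix z
      have "actX al alv (alt s' s (Suc m)) z = rX al alv t (actX al alv w z)"
        unfolding alt_snoc actX_snoc t_def w_def by simp
      also have "\<dots> = actX al alv (rev w @ [s] @ w) (actX al alv w z)" by (simp only: refl_t)
      also have "\<dots> = actX al alv (s # w) z" by (simp add: actX_append)
      finally show "actX al alv (alt s' s (Suc m)) z = actX al alv (s # w) z" .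
    qed
    define c1 where "c1 = (if even (Suc m) then s' else s)"
    define c2 where "c2 = (if even (Suc m) then s else s')"
    define rest where "rest = alt c1 c2 (k - Suc m)"
    have kk: "k = Suc m + (k - Suc m)" using m m0k by simp
    have qsplit: "q = alt s' s (Suc m) @ rest"
    proof -
      have q1: "q = alt s' s k" unfolding k_def by (rule qalt)
      have "alt s' s k = alt s' s (Suc m + (k - Suc m))" using kk by (rule arg_cong)
      then have "q = alt s' s (Suc m + (k - Suc m))" using q1 by simp
      then show ?thesis unfolding alt_add rest_def c1_def c2_def .
    qed
    have "actX al alv (s # q) = actX al alv (w @ rest)"
    proof (rule ext)
      fix z
      have "actX al alv (s # q) z = actX al alv rest (actX al alv (alt s' s (Suc m)) (rX al alv s z))"
        by (simp add: qsplit actX_append)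
      also have "\<dots> = actX al alv rest (actX al alv w z)" by (simp only: braid actX_Cons rr)
      also have "\<dots> = actX al alv (w @ rest) z" by (simp add: actX_append)
      finally show "actX al alv (s # q) z = actX al alv (w @ rest) z" .
    qed
    moreover have "set (w @ rest) \<subseteq> {s, s'}"
      using set_alt[of s' s m] set_alt[of c1 c2 "k - Suc m"] by (auto simp: w_def rest_def c1_def c2_def split: if_splits)
    moreover have "length (w @ rest) < length q" using m m0k by (simp add: w_def rest_def k_def)
    ultimately show False using min2 by fastforce
  qed
  then show ?thesis using qk by blast
qed

end


context kmd begin

lemma nnc_al: "nnc al (al i)"
  unfolding nnc_def by (rule exI[of _ "\<lambda>k. if k = i then 1 else 0"]) (simp add: lincomb_delta)

lemma nnc_comb:
  assumes "nnc al p" "nnc al q" "0 \<le> x" "0 \<le> y"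
  shows "nnc al (\<lambda>j. x * p j + y * q j)"
proof -
  obtain c d where c: "\<forall>i. 0 \<le> c i" "p = lincomb c al" and d: "\<forall>i. 0 \<le> d i" "q = lincomb d al"
    using assms(1,2) unfolding nnc_def by auto
  have "(\<lambda>j. x * p j + y * q j) = lincomb (\<lambda>i. x * c i + y * d i) al"
    by (simp add: c(2) d(2) lincomb_add lincomb_smult[of x c, symmetric] lincomb_smult[of y d, symmetric])
      (simp add: lincomb_def sum.distrib sum_distrib_left algebra_simps)
  moreover have "\<forall>i. 0 \<le> x * c i + y * d i" using c(1) d(1) assms(3,4) by simp
  ultimately show ?thesis unfolding nnc_def by (intro exI[of _ "\<lambda>i. x * c i + y * d i"]) simp
qed

lemma E_aux:
  "\<forall>ws i. wlen al alv (actX al alv ws) = n \<longrightarrow> n \<le> wlen al alv (actX al alv (i # ws))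
     \<longrightarrow> nnc al (actX al alv ws (al i))"
proof (induction n rule: less_induct)
  case (less n)
  show ?case
  proof (intro allI impI)
    fix ws i
    assume hn: "wlen al alv (actX al alv ws) = n" and hle: "n \<le> wlen al alv (actX al alv (i # ws))"
    define v where "v = actX al alv ws"
    obtain ws0 where ws0: "length ws0 = n" "actX al alv ws0 = v"
      using wlen_ex[of al alv ws] hn v_def by auto
    have G: "\<And>ys. actX al alv ys = v \<Longrightarrow> n \<le> length ys"
      using wlen_le hn v_def by metis
    show "nnc al (actX al alv ws (al i))"
    proof (cases ws0)
      case Nil
      then have "actX al alv ws (al i) = al i" using ws0(2) v_def by (metis actX_Nil)
      then show ?thesis using nnc_al by simp
    next
      case (Cons s' ws1)
      have len1: "length ws1 + 1 = n" using ws0(1) Cons by simp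
      have ss: "s' \<noteq> i"
      proof
        assume "s' = i"
        have "actX al alv (i # ws) = actX al alv ws1"
        proof (rule ext)
          fix z
          have "actX al alv (i # ws) z = v (rX al alv i z)" by (simp add: v_def)
          also have "\<dots> = actX al alv ws1 z" using ws0(2)[symmetric] Cons \<open>s' = i\<close> by simp
          finally show "actX al alv (i # ws) z = actX al alv ws1 z" .
        qed
        then have "wlen al alv (actX al alv (i # ws)) \<le> length ws1" using wlen_le by metis
        then show False using hle len1 by simp
      qed
      define A where "A = (\<lambda>(p, q). set q \<subseteq> {i, s'} \<and> actX al alv (q @ p) = v \<and> length p + length q = n)"
      have A0: "A (ws1, [s'])" unfolding A_def using ws0 Cons len1 by auto
      obtain pq where Apq: "A pq" and pqmin: "\<forall>y. A y \<longrightarrow> length (fst pq) \<le> length (fst y)"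
        using ex_has_least_nat[of A "(ws1, [s'])" "\<lambda>pq. length (fst pq)"] A0 by blast
      obtain p q where pq: "pq = (p, q)" by (cases pq)
      have qset: "set q \<subseteq> {i, s'}" and vpq: "actX al alv (q @ p) = v" and lpq: "length p + length q = n"
        using Apq pq unfolding A_def by auto
      have pmin: "\<And>p' q'. A (p', q') \<Longrightarrow> length p \<le> length p'" using pqmin pq by fastforce
      have vpq': "\<And>z. v z = actX al alv p (actX al alv q z)"
        using vpq by (metis actX_append)
      have lp: "length p < n" using pmin[OF A0] len1 by simp
      have pminw: "\<And>p'. actX al alv p' = actX al alv p \<Longrightarrow> length p \<le> length p'"
      proof -
        fix p' assume h: "actX al alv p' = actX al alv p"
        have "actX al alv (q @ p') = v" using vpq' h by (auto simp: actX_append)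
        then have "n \<le> length (q @ p')" by (rule G)
        then show "length p \<le> length p'" using lpq by simp
      qed
      have wlp: "wlen al alv (actX al alv p) = length p"
      proof -
        obtain p' where "length p' = wlen al alv (actX al alv p)" "actX al alv p' = actX al alv p"
          using wlen_ex by blast
        then show ?thesis using pminw wlen_le[of al alv p] by fastforce
      qed
      have pdesc: "\<And>c. c \<in> {i, s'} \<Longrightarrow> length p \<le> wlen al alv (actX al alv (c # p))"
      proof (rule ccontr)
        fix c assume c: "c \<in> {i, s'}" and h: "\<not> length p \<le> wlen al alv (actX al alv (c # p))"
        obtain p'' where p'': "length p'' = wlen al alv (actX al alv (c # p))" "actX al alv p'' = actX al alv (c # p)"
          using wlen_ex by blast
        have "actX al alv ((q @ [c]) @ p'') = v"
        proof (rule ext)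
          fix z
          have "actX al alv ((q @ [c]) @ p'') z = actX al alv (c # p) (rX al alv c (actX al alv q z))"
            by (simp add: actX_append p''(2) actX_snoc)
          also have "\<dots> = v z" by (simp add: vpq')
          finally show "actX al alv ((q @ [c]) @ p'') z = v z" .
        qed
        moreover have "length p'' + length (q @ [c]) \<le> n" using h p''(1) lpq by simp
        ultimately have "A (p'', q @ [c])" using G[of "(q @ [c]) @ p''"] qset c unfolding A_def by auto
        then have "length p \<le> length p''" by (rule pmin)
        then show False using h p''(1) by simp
      qed
      have IHc: "\<And>c. c \<in> {i, s'} \<Longrightarrow> nnc al (actX al alv p (al c))"
      proof -
        fix c assume c: "c \<in> {i, s'}"
        have H: "\<forall>ws i. wlen al alv (actX al alv ws) = length p \<longrightarrow> length p \<le> wlen al alv (actX al alv (i # ws))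
             \<longrightarrow> nnc al (actX al alv ws (al i))" by (rule less.IH[OF lp])
        show "nnc al (actX al alv p (al c))" using H[rule_format, OF wlp pdesc[OF c]] .
      qed
      have min1: "\<forall>q'. set q' \<subseteq> {i, s'} \<longrightarrow> actX al alv q' = actX al alv q \<longrightarrow> length q \<le> length q'"
      proof (intro allI impI)
        fix q' assume "set q' \<subseteq> {i, s'}" "actX al alv q' = actX al alv q"
        then have "actX al alv (q' @ p) = v" using vpq' by (auto simp: actX_append)
        then have "n \<le> length (q' @ p)" by (rule G)
        then show "length q \<le> length q'" using lpq by simp
      qed
      have min2: "\<forall>q'. set q' \<subseteq> {i, s'} \<longrightarrow> actX al alv q' = actX al alv (i # q) \<longrightarrow> length q \<le> length q'"
      proof (intro allI impI)
        fix q' assume "set q' \<subseteq> {i, s'}" and h: "actX al alv q' = actX al alv (i # q)"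
        have "actX al alv (q' @ p) = actX al alv (i # ws)"
        proof (rule ext)
          fix z
          have "actX al alv (q' @ p) z = actX al alv p (actX al alv q (rX al alv i z))"
            by (simp add: actX_append h)
          also have "\<dots> = actX al alv (i # ws) z" by (simp add: vpq'[symmetric] v_def)
          finally show "actX al alv (q' @ p) z = actX al alv (i # ws) z" .
        qed
        then have "wlen al alv (actX al alv (i # ws)) \<le> length (q' @ p)" using wlen_le by metis
        then show "length q \<le> length q'" using hle lpq by simp
      qed
      obtain x y where xy: "0 \<le> x" "0 \<le> y" "actX al alv q (al i) = (\<lambda>j. x * al i j + y * al s' j)"
        using rank2[OF ss[symmetric] qset min1 min2] by blast
      have "actX al alv ws (al i) = actX al alv p (actX al alv q (al i))"
        using vpq' v_def by simp
      also have "\<dots> = (\<lambda>j. x * actX al alv p (al i) j + y * actX al alv p (al s') j)"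
        by (simp add: xy(3) actX_lin)
      finally show ?thesis using nnc_comb[OF IHc IHc xy(1,2)] by simp
    qed
  qed
qed

theorem E: "wlen al alv (actX al alv ws) \<le> wlen al alv (actX al alv (i # ws)) \<Longrightarrow> nnc al (actX al alv ws (al i))"
  using E_aux by blast

end


lemma pair_unit: "pair y (\<lambda>l. if l = m then 1 else 0) = y m"
proof -
  have "(\<Sum>j\<in>UNIV. y j * (if j = m then 1 else 0)) = (\<Sum>j\<in>UNIV. if j = m then y m else 0)"
    by (rule sum.cong) auto
  then show ?thesis unfolding pair_def by simp
qed

lemma lincomb_neg: "lincomb (\<lambda>i. - c i) v = (\<lambda>m. - lincomb c v m)"
  by (simp add: lincomb_def sum_negf)

context kmd begin

lemma act_ii: "actX al alv (i # i # ws) = actX al alv ws"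
  by (rule ext) simp

lemma E_neg:
  assumes "wlen al alv (actX al alv (i # ws)) < wlen al alv (actX al alv ws)"
  shows "nnc al (\<lambda>j. - actX al alv ws (al i) j)"
proof -
  have "wlen al alv (actX al alv (i # ws)) \<le> wlen al alv (actX al alv (i # i # ws))"
    using assms by (simp only: act_ii)
  then have "nnc al (actX al alv (i # ws) (al i))" by (rule E)
  then show ?thesis by (simp add: rX_al actX_neg)
qed

lemma neg_not_pos: "x \<in> pos_roots al alv \<Longrightarrow> x \<in> neg_roots al alv \<Longrightarrow> False"
  using nn_both roots_nz pos_roots_iff neg_roots_iff by blast

lemma act_pos_or_neg: "actX al alv ws (al i) \<in> pos_roots al alv \<or> actX al alv ws (al i) \<in> neg_roots al alv"
proof (cases "wlen al alv (actX al alv ws) \<le> wlen al alv (actX al alv (i # ws))")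
  case True
  then have "nnc al (actX al alv ws (al i))" by (rule E)
  then show ?thesis using rootsI pos_roots_iff by blast
next
  case False
  then have "nnc al (\<lambda>j. - actX al alv ws (al i) j)" by (intro E_neg) simp
  then show ?thesis using rootsI neg_roots_iff by blast
qed

lemma dichotomy: "r \<in> roots al alv \<Longrightarrow> r \<in> pos_roots al alv \<or> r \<in> neg_roots al alv"
  unfolding roots_def using act_pos_or_neg by blast

lemma E_iff: "nnc al (actX al alv ws (al i)) \<longleftrightarrow> wlen al alv (actX al alv ws) \<le> wlen al alv (actX al alv (i # ws))"
proof
  assume h: "nnc al (actX al alv ws (al i))"
  show "wlen al alv (actX al alv ws) \<le> wlen al alv (actX al alv (i # ws))"
  proof (rule ccontr)
    assume "\<not> ?thesis"
    then have "nnc al (\<lambda>j. - actX al alv ws (al i) j)" by (intro E_neg) simp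
    then have "actX al alv ws (al i) = (\<lambda>_. 0)" using h nn_both by blast
    then show False using act_nz by blast
  qed
qed (rule E)

lemma id_if_pos:
  assumes "\<And>i. nnc al (actX al alv ws (al i))"
  shows "actX al alv ws z = z"
proof -
  obtain ws0 where ws0: "length ws0 = wlen al alv (actX al alv ws)" "actX al alv ws0 = actX al alv ws"
    using wlen_ex by blast
  show ?thesis
  proof (cases ws0)
    case Nil
    have "actX al alv ws z = actX al alv ws0 z" using ws0(2) by simp
    then show ?thesis using Nil by simp
  next
    case (Cons i ws1)
    have "actX al alv (i # ws) = actX al alv ws1"
    proof (rule ext)
      fix z
      have "actX al alv (i # ws) z = actX al alv ws0 (rX al alv i z)" using ws0(2) by simp
      also have "\<dots> = actX al alv ws1 z" using Cons by simp
      finally show "actX al alv (i # ws) z = actX al alv ws1 z" .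
    qed
    then have "wlen al alv (actX al alv (i # ws)) < wlen al alv (actX al alv ws)"
      using wlen_le[of al alv ws1] ws0(1) Cons by simp
    then have "nnc al (\<lambda>j. - actX al alv ws (al i) j)" by (rule E_neg)
    then have "actX al alv ws (al i) = (\<lambda>_. 0)" using assms nn_both by blast
    then show ?thesis using act_nz by blast
  qed
qed

lemma coeff_unique: "lincomb c al = lincomb d al \<Longrightarrow> c k = d k"
proof -
  assume "lincomb c al = lincomb d al"
  then have "c = d" by (rule lincomb_unique[OF li])
  then show ?thesis by simp
qed

lemma sign_change:
  assumes zp: "z \<in> pos_roots al alv" and zn: "rX al alv j z \<in> neg_roots al alv"
  shows "z = al j"
proof -
  obtain c where c: "\<forall>i. 0 \<le> c i" "z = lincomb c al" using zp unfolding pos_roots_def by auto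
  obtain d where d: "\<forall>i. 0 \<le> d i" "(\<lambda>m. - rX al alv j z m) = lincomb d al"
    using zn unfolding neg_roots_iff nnc_def by auto
  define p where "p = pair (alv j) (lincomb c al)"
  have rz: "rX al alv j z = lincomb (\<lambda>i. c i - (if i = j then p else 0)) al"
    unfolding c(2) p_def by (rule rX_lincomb)
  have "(\<lambda>m. - rX al alv j z m) = lincomb (\<lambda>i. - (c i - (if i = j then p else 0))) al"
    unfolding rz lincomb_neg ..
  then have eq: "lincomb (\<lambda>i. - (c i - (if i = j then p else 0))) al = lincomb d al" using d(2) by simp
  have "\<And>k. - (c k - (if k = j then p else 0)) = d k" using coeff_unique[OF eq] by blast
  then have ck: "\<And>k. k \<noteq> j \<Longrightarrow> c k = 0" using c(1) d(1) by (smt (verit))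
  have "c = (\<lambda>k. if k = j then c j else 0)" using ck by auto
  then have "z = lincomb (\<lambda>k. if k = j then c j else 0) al" using c(2) by simp
  then have zc: "z = (\<lambda>m. c j * al j m)" by (simp add: lincomb_delta2)
  have "c j = 1 \<or> c j = -1" using root_mult[OF _ zc] zp unfolding pos_roots_def by blast
  moreover have "0 \<le> c j" using c(1) by blast
  ultimately have "c j = 1" by auto
  then show ?thesis using zc by simp
qed

lemma pos_reflect:
  assumes "g \<in> pos_roots al alv" "g \<noteq> al i"
  shows "rX al alv i g \<in> pos_roots al alv"
proof -
  have "g \<in> roots al alv" using assms(1) unfolding pos_roots_def by auto
  then obtain ws k where g: "g = actX al alv ws (al k)" unfolding roots_def by auto
  have "rX al alv i g \<in> roots al alv" by (rule rootsI[of _ "ws @ [i]" k]) (simp add: g actX_snoc)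
  then have "rX al alv i g \<in> pos_roots al alv \<or> rX al alv i g \<in> neg_roots al alv" by (rule dichotomy)
  then show ?thesis using sign_change assms by blast
qed

lemma not_neg_special:
  assumes "k \<noteq> j"
  shows "\<not> nnc al (\<lambda>m. - (al k m - e * al j m))"
proof
  assume "nnc al (\<lambda>m. - (al k m - e * al j m))"
  then obtain d where d: "\<forall>i. 0 \<le> d i" "(\<lambda>m. - (al k m - e * al j m)) = lincomb d al"
    unfolding nnc_def by auto
  have "(\<lambda>m. - (al k m - e * al j m)) = lincomb (\<lambda>l. - ((if l = k then 1 else 0) - e * (if l = j then 1 else 0))) al"
    unfolding lincomb_def
  proof (rule ext)
    fix m
    have "(\<Sum>i\<in>UNIV. - ((if i = k then 1 else 0) - e * (if i = j then 1 else 0)) * al i m)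
        = (\<Sum>i\<in>UNIV. (if i = j then e * al j m else 0) - (if i = k then al k m else 0))"
      by (rule sum.cong) (auto simp: algebra_simps)
    also have "\<dots> = e * al j m - al k m" by (simp add: sum_subtractf)
    finally show "- (al k m - e * al j m) = (\<Sum>i\<in>UNIV. - ((if i = k then 1 else 0) - e * (if i = j then 1 else 0)) * al i m)"
      by simp
  qed
  then have eq: "lincomb (\<lambda>l. - ((if l = k then 1 else 0) - e * (if l = j then 1 else 0))) al = lincomb d al"
    using d(2) by simp
  have "- ((if k = k then 1 else 0) - e * (if k = j then 1 else 0)) = d k"
    using coeff_unique[OF eq] by blast
  then have "d k = -1" using assms by simp
  moreover have "0 \<le> d k" using d(1) by blast
  ultimately show False by simp
qed

theorem coroot_wd:
  assumes h: "actX al alv u (al i) = actX al alv v (al j)"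
  shows "actY al alv u (alv i) = actY al alv v (alv j)"
proof -
  define w where "w = u @ rev v"
  have hw: "actX al alv w (al i) = al j" by (simp add: w_def actX_append h)
  define c where "c = actY al alv w (alv i)"
  have hc2: "pair c (al j) = 2" using pact[of w "alv i" "al i"] by (simp add: c_def hw)
  define T where "T = actX al alv (rev w @ [i] @ w)"
  have T: "\<And>z. T z = (\<lambda>m. z m - pair c z * al j m)" unfolding T_def act_formula c_def hw ..
  define t' where "t' = j # (rev w @ [i] @ w)"
  have t': "\<And>z. actX al alv t' z = T (rX al alv j z)" by (simp add: t'_def T_def)
  have allpos: "\<And>k. nnc al (actX al alv t' (al k))"
  proof -
    fix k
    show "nnc al (actX al alv t' (al k))"
    proof (cases "k = j")
      case True
      have "actX al alv t' (al k) = T (\<lambda>m. - al j m)" using True t' by (simp add: rX_al)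
      also have "\<dots> = al j" unfolding T by (simp add: pair_neg hc2)
      finally show ?thesis using nnc_al by simp
    next
      case False
      have g: "actX al alv t' (al k) \<in> roots al alv" by (rule rootsI) simp
      define e where "e = pair (alv j) (al k) + pair c (rX al alv j (al k))"
      have geq: "actX al alv t' (al k) = (\<lambda>m. al k m - e * al j m)"
        unfolding t' T by (auto simp: rX_def e_def algebra_simps)
      have "actX al alv t' (al k) \<notin> neg_roots al alv"
        using not_neg_special[OF False, of e] unfolding neg_roots_iff geq by blast
      then show ?thesis using dichotomy[OF g] pos_roots_iff by blast
    qed
  qed
  have tid: "\<And>z. actX al alv t' z = z" by (rule id_if_pos[OF allpos])
  have Tr: "\<And>z. T z = rX al alv j z"
  proof -
    fix z
    have "T z = T (rX al alv j (rX al alv j z))" by simp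
    also have "\<dots> = actX al alv t' (rX al alv j z)" using t' by simp
    also have "\<dots> = rX al alv j z" using tid by simp
    finally show "T z = rX al alv j z" .
  qed
  have "\<exists>m. al j m \<noteq> 0"
  proof (rule ccontr)
    assume "\<not> (\<exists>m. al j m \<noteq> 0)"
    then have "al j = (\<lambda>_. 0)" by auto
    then show False using al_nz by blast
  qed
  then obtain m0 where m0: "al j m0 \<noteq> 0" by blast
  have "\<And>z. pair c z = pair (alv j) z"
  proof -
    fix z
    have "T z m0 = rX al alv j z m0" using Tr by simp
    then have "pair c z * al j m0 = pair (alv j) z * al j m0" unfolding T by (simp add: rX_def)
    then show "pair c z = pair (alv j) z" using m0 by simp
  qed
  then have "\<And>m. c m = alv j m" by (metis pair_unit)
  then have cj: "c = alv j" by auto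
  have "actY al alv v (alv j) = actY al alv v (actY al alv w (alv i))" using cj c_def by simp
  also have "\<dots> = actY al alv u (alv i)"
    using kmd.act_rev2[OF dual, of v "actY al alv u (alv i)"]
    by (simp add: w_def actY_is_actX actX_append)
  finally show ?thesis by simp
qed

end


declare actX_Cons[simp del]

context kmd begin

lemma min_sub:
  assumes "length (xs @ ys @ zs) = wlen al alv (actX al alv (xs @ ys @ zs))"
  shows "length ys = wlen al alv (actX al alv ys)"
proof -
  obtain ys' where ys': "length ys' = wlen al alv (actX al alv ys)" "actX al alv ys' = actX al alv ys"
    using wlen_ex by blast
  have "actX al alv (xs @ ys' @ zs) = actX al alv (xs @ ys @ zs)"
    by (rule ext) (simp add: actX_append ys'(2))
  then have "wlen al alv (actX al alv (xs @ ys @ zs)) \<le> length (xs @ ys' @ zs)" using wlen_le by metis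
  then have "length ys \<le> length ys'" using assms by simp
  then show ?thesis using ys'(1) wlen_le[of al alv ys] by simp
qed

lemma neg_al_not_pos: "(\<lambda>m. - al i m) \<notin> pos_roots al alv"
proof
  assume "(\<lambda>m. - al i m) \<in> pos_roots al alv"
  moreover have "(\<lambda>m. - al i m) \<in> neg_roots al alv"
    using roots_neg[OF al_root] nnc_al unfolding neg_roots_iff by simp
  ultimately show False using neg_not_pos by blast
qed

lemma al_pos: "al i \<in> pos_roots al alv"
  using al_root nnc_al pos_roots_iff by blast

lemma rX_inj: "inj (rX al alv i)"
  by (metis injI rr)

lemma Inv_cons:
  "Inv al alv (actX al alv (i # ws)) = rX al alv i ` (Inv al alv (actX al alv ws) - {al i})
     \<union> (if actX al alv ws (al i) \<in> pos_roots al alv then {al i} else {})"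
  (is "?L = ?R")
proof
  show "?L \<subseteq> ?R"
  proof
    fix g assume g: "g \<in> ?L"
    then have gp: "g \<in> pos_roots al alv" and gn: "actX al alv ws (rX al alv i g) \<in> neg_roots al alv"
      unfolding Inv_def by (auto simp: actX_Cons)
    show "g \<in> ?R"
    proof (cases "g = al i")
      case True
      then have "(\<lambda>m. - actX al alv ws (al i) m) \<in> neg_roots al alv"
        using gn by (simp add: rX_al actX_neg)
      then have "actX al alv ws (al i) \<in> pos_roots al alv"
        unfolding neg_roots_iff pos_roots_iff using roots_neg by fastforce
      then show ?thesis using True by simp
    next
      case False
      have hp: "rX al alv i g \<in> pos_roots al alv" by (rule pos_reflect[OF gp False])
      have "rX al alv i g \<noteq> al i"
      proof
        assume "rX al alv i g = al i"
        then have "g = (\<lambda>m. - al i m)" by (metis rr rX_al two)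
        then show False using gp neg_al_not_pos by simp
      qed
      then have "rX al alv i g \<in> Inv al alv (actX al alv ws) - {al i}"
        using hp gn unfolding Inv_def by auto
      then have "rX al alv i (rX al alv i g) \<in> rX al alv i ` (Inv al alv (actX al alv ws) - {al i})" by blast
      then show ?thesis by simp
    qed
  qed
next
  show "?R \<subseteq> ?L"
  proof
    fix g assume g: "g \<in> ?R"
    show "g \<in> ?L"
    proof (cases "g \<in> rX al alv i ` (Inv al alv (actX al alv ws) - {al i})")
      case True
      then obtain h where h: "h \<in> Inv al alv (actX al alv ws)" "h \<noteq> al i" "g = rX al alv i h" by blast
      have "g \<in> pos_roots al alv" using pos_reflect h unfolding Inv_def by auto
      moreover have "actX al alv (i # ws) g \<in> neg_roots al alv" using h unfolding Inv_def by (simp add: actX_Cons)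
      ultimately show ?thesis unfolding Inv_def by simp
    next
      case False
      then have gi: "g = al i" and p: "actX al alv ws (al i) \<in> pos_roots al alv"
        using g by (auto split: if_splits)
      have "actX al alv (i # ws) g = (\<lambda>m. - actX al alv ws (al i) m)" using gi by (simp add: rX_al actX_neg actX_Cons)
      moreover have "(\<lambda>m. - actX al alv ws (al i) m) \<in> neg_roots al alv"
        using p roots_neg unfolding pos_roots_iff neg_roots_iff by simp
      ultimately show ?thesis using gi al_pos unfolding Inv_def by simp
    qed
  qed
qed

lemma Inv_id: "Inv al alv (\<lambda>a. a) = {}"
  unfolding Inv_def using neg_not_pos by auto

lemma Inv_Nil: "Inv al alv (actX al alv []) = {}"
  unfolding Inv_def using neg_not_pos by auto

lemma Inv_finite: "finite (Inv al alv (actX al alv ws))"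
proof (induction ws)
  case Nil then show ?case by (simp add: Inv_id)
next
  case (Cons i ws) then show ?case by (simp add: Inv_cons)
qed

lemma al_in_Inv_iff: "al i \<in> Inv al alv (actX al alv ws) \<longleftrightarrow> actX al alv ws (al i) \<notin> pos_roots al alv"
  unfolding Inv_def using act_pos_or_neg neg_not_pos al_pos by blast

lemma Inv_card_min:
  "length ws = wlen al alv (actX al alv ws) \<Longrightarrow> card (Inv al alv (actX al alv ws)) = length ws"
proof (induction ws)
  case Nil then show ?case by (simp add: Inv_id)
next
  case (Cons i ws)
  have mws: "length ws = wlen al alv (actX al alv ws)"
    using min_sub[of "[i]" ws "[]"] Cons.prems by simp
  have "wlen al alv (actX al alv ws) \<le> wlen al alv (actX al alv (i # ws))"
    using mws Cons.prems by simp
  then have "nnc al (actX al alv ws (al i))" by (rule E)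
  then have p: "actX al alv ws (al i) \<in> pos_roots al alv" using pos_roots_iff rootsI by blast
  then have ni: "al i \<notin> Inv al alv (actX al alv ws)" using al_in_Inv_iff by blast
  have "al i \<notin> rX al alv i ` Inv al alv (actX al alv ws)"
  proof
    assume "al i \<in> rX al alv i ` Inv al alv (actX al alv ws)"
    then obtain h where "h \<in> Inv al alv (actX al alv ws)" "al i = rX al alv i h" by blast
    then have "h = (\<lambda>m. - al i m)" by (metis rr rX_al two)
    then show False using \<open>h \<in> Inv al alv (actX al alv ws)\<close> neg_al_not_pos unfolding Inv_def by auto
  qed
  moreover have "card (rX al alv i ` Inv al alv (actX al alv ws)) = card (Inv al alv (actX al alv ws))"
    by (rule card_image) (meson rX_inj inj_on_subset subset_UNIV)
  ultimately have "card (Inv al alv (actX al alv (i # ws))) = card (Inv al alv (actX al alv ws)) + 1"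
    using ni p Inv_finite by (simp add: Inv_cons)
  then show ?case using Cons.IH mws by simp
qed

lemma ht_lincomb: "ht alv (lincomb N alv) = (\<Sum>i\<in>UNIV. N i)"
proof -
  have "(THE M. lincomb N alv = lincomb M alv) = N"
    by (rule the_equality) (auto dest: lincomb_unique[OF liv])
  then show ?thesis unfolding ht_def by simp
qed

lemma rY_lincomb: "rY al alv k (lincomb N alv) = lincomb (\<lambda>i. N i - (if i = k then pair (lincomb N alv) (al k) else 0)) alv"
proof -
  have e: "pair (al k) (lincomb N alv) = pair (lincomb N alv) (al k)" by (rule pair_sym)
  show ?thesis using rX_lincomb[of alv al k N] unfolding rY_is_rX e .
qed

lemma ht_rY:
  "ht alv (rY al alv k (lincomb N alv)) = ht alv (lincomb N alv) - pair (lincomb N alv) (al k)"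
proof -
  have "(\<Sum>i\<in>UNIV. N i - (if i = k then pair (lincomb N alv) (al k) else 0))
      = (\<Sum>i\<in>UNIV. N i) - pair (lincomb N alv) (al k)"
    by (simp add: sum_subtractf)
  then show ?thesis by (simp add: rY_lincomb ht_lincomb)
qed

lemma rYrY: "rY al alv i (rY al alv i y) = y"
  using kmd.rr[OF dual] by (simp add: rY_is_rX)

lemma pair_rX_swap: "pair y (rX al alv i h) = pair (rY al alv i y) h"
  using pair_rY_rX[of alv i al "rY al alv i y" h] by (simp add: rYrY)

lemma Inv_sum:
  "(\<Sum>g\<in>Inv al alv (actX al alv ws). pair (lincomb N alv) g)
     = ht alv (lincomb N alv) - ht alv (actY al alv ws (lincomb N alv))"
proof (induction ws arbitrary: N)
  case Nil then show ?case by (simp add: Inv_id actY_def)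
next
  case (Cons i ws)
  define y where "y = lincomb N alv"
  define N' where "N' = (\<lambda>k. N k - (if k = i then pair (lincomb N alv) (al i) else 0))"
  have ry: "rY al alv i y = lincomb N' alv" by (simp add: y_def N'_def rY_lincomb)
  define S where "S = Inv al alv (actX al alv ws)"
  have fS: "finite S" by (simp add: S_def Inv_finite)
  have IH: "(\<Sum>g\<in>S. pair (rY al alv i y) g) = ht alv (rY al alv i y) - ht alv (actY al alv ws (rY al alv i y))"
    using Cons.IH[of N'] by (simp add: ry S_def)
  have hty: "ht alv (rY al alv i y) = ht alv y - pair y (al i)" unfolding y_def by (rule ht_rY)
  have act: "actY al alv (i # ws) y = actY al alv ws (rY al alv i y)" by (simp add: actY_def actX_def)
  have reidx: "\<And>T. T \<subseteq> S \<Longrightarrow> (\<Sum>g\<in>rX al alv i ` T. pair y g) = (\<Sum>h\<in>T. pair (rY al alv i y) h)"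
  proof -
    fix T assume "T \<subseteq> S"
    have "(\<Sum>g\<in>rX al alv i ` T. pair y g) = (\<Sum>h\<in>T. pair y (rX al alv i h))"
      by (rule sum.reindex_cong[of "rX al alv i"]) (auto intro: inj_on_subset[OF rX_inj])
    then show "(\<Sum>g\<in>rX al alv i ` T. pair y g) = (\<Sum>h\<in>T. pair (rY al alv i y) h)"
      by (simp add: pair_rX_swap)
  qed
  have prY: "pair (rY al alv i y) (al i) = - pair y (al i)"
    using pair_rX_swap[of y i "al i"] by (simp add: rX_al pair_neg)
  show ?case
  proof (cases "actX al alv ws (al i) \<in> pos_roots al alv")
    case True
    then have ni: "al i \<notin> S" using al_in_Inv_iff S_def by blast
    have nimg: "al i \<notin> rX al alv i ` S"
    proof
      assume "al i \<in> rX al alv i ` S"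
      then obtain h where "h \<in> S" "al i = rX al alv i h" by blast
      then have "h = (\<lambda>m. - al i m)" by (metis rr rX_al two)
      then show False using \<open>h \<in> S\<close> neg_al_not_pos unfolding S_def Inv_def by auto
    qed
    have "Inv al alv (actX al alv (i # ws)) = rX al alv i ` S \<union> {al i}"
      using True ni by (simp add: Inv_cons S_def)
    then have "(\<Sum>g\<in>Inv al alv (actX al alv (i # ws)). pair y g) = (\<Sum>g\<in>rX al alv i ` S. pair y g) + pair y (al i)"
      using nimg fS by simp
    also have "\<dots> = (\<Sum>h\<in>S. pair (rY al alv i y) h) + pair y (al i)" using reidx by simp
    finally show ?thesis using IH hty act by (simp add: y_def)
  next
    case False
    then have ii: "al i \<in> S" using al_in_Inv_iff S_def by blast
    have "Inv al alv (actX al alv (i # ws)) = rX al alv i ` (S - {al i})"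
      using False by (simp add: Inv_cons S_def)
    then have "(\<Sum>g\<in>Inv al alv (actX al alv (i # ws)). pair y g) = (\<Sum>h\<in>S - {al i}. pair (rY al alv i y) h)"
      using reidx by simp
    also have "\<dots> = (\<Sum>h\<in>S. pair (rY al alv i y) h) - pair (rY al alv i y) (al i)"
      using fS ii by (simp add: sum_diff1)
    finally show ?thesis using IH hty act prY by (simp add: y_def)
  qed
qed

end


lemma fold_idx: "fold (\<lambda>k. rX al alv (idx k)) xs x = actX al alv (map idx xs) x"
  by (simp add: actX_def fold_map comp_def)

lemma fold_idxY: "fold (\<lambda>k. rY al alv (idx k)) xs x = actY al alv (map idx xs) x"
  by (simp add: actY_def fold_map comp_def)

context kmd begin

lemma wlen_rev:
  assumes "length xs = wlen al alv (actX al alv xs)"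
  shows "length (rev xs) = wlen al alv (actX al alv (rev xs))"
proof -
  obtain ys where ys: "length ys = wlen al alv (actX al alv (rev xs))" "actX al alv ys = actX al alv (rev xs)"
    using wlen_ex by blast
  have "actX al alv (rev ys) = actX al alv xs"
  proof (rule ext)
    fix z
    have "actX al alv ys (actX al alv xs z) = z" using ys(2) by simp
    then have "actX al alv (rev ys) z = actX al alv (rev ys) (actX al alv ys (actX al alv xs z))" by simp
    then show "actX al alv (rev ys) z = actX al alv xs z" by simp
  qed
  then have "wlen al alv (actX al alv xs) \<le> length (rev ys)" using wlen_le by metis
  then show ?thesis using assms ys(1) wlen_le[of al alv "rev xs"] by simp
qed

lemma inv_pos_neg:
  assumes m: "length (pre @ [c] @ post) = wlen al alv (actX al alv (pre @ [c] @ post))"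
  shows "actX al alv (rev pre) (al c) \<in> pos_roots al alv \<and>
         actX al alv (pre @ [c] @ post) (actX al alv (rev pre) (al c)) \<in> neg_roots al alv"
proof
  have m1: "length (c # post) = wlen al alv (actX al alv (c # post))"
    using min_sub[of pre "c # post" "[]"] m by simp
  have "wlen al alv (actX al alv post) \<le> wlen al alv (actX al alv (c # post))"
    using m1 wlen_le[of al alv post] by simp
  then have "nnc al (actX al alv post (al c))" by (rule E)
  then have pp: "actX al alv post (al c) \<in> pos_roots al alv" using pos_roots_iff rootsI by blast
  have "actX al alv (pre @ [c] @ post) (actX al alv (rev pre) (al c)) = (\<lambda>j. - actX al alv post (al c) j)"
    by (simp add: actX_append actX_Cons rX_al actX_neg)
  then show "actX al alv (pre @ [c] @ post) (actX al alv (rev pre) (al c)) \<in> neg_roots al alv"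
    using pp roots_neg unfolding pos_roots_iff neg_roots_iff by simp
  have m2: "length (pre @ [c]) = wlen al alv (actX al alv (pre @ [c]))"
    using min_sub[of "[]" "pre @ [c]" post] m by simp
  have m3: "length (c # rev pre) = wlen al alv (actX al alv (c # rev pre))"
    using wlen_rev[OF m2] by simp
  have "wlen al alv (actX al alv (rev pre)) \<le> wlen al alv (actX al alv (c # rev pre))"
    using m3 wlen_le[of al alv "rev pre"] by simp
  then have "nnc al (actX al alv (rev pre) (al c))" by (rule E)
  then show "actX al alv (rev pre) (al c) \<in> pos_roots al alv" using pos_roots_iff rootsI by blast
qed

lemma prY: "pair (rY al alv j y) (al j) = - pair y (al j)"
  using pair_rX_swap[of y j "al j"] by (simp add: rX_al pair_neg)

lemma expr_from_word:
  "\<exists>idx'. actX al alv ws (al i) = fold (\<lambda>k. rX al alv (idx' k)) [2..<(length ws + 1) + 1] (al (idx' 1))"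
proof -
  define idx' where "idx' = (\<lambda>k::nat. if k = 1 then i else ws ! (k - 2))"
  have "[2..<length ws + 2] = map (\<lambda>k. k + 2) [0..<length ws]" by (simp only: map_add_upt)
  then have "map idx' [2..<length ws + 2] = map (\<lambda>k. idx' (k + 2)) [0..<length ws]" by simp
  also have "\<dots> = map (\<lambda>k. ws ! k) [0..<length ws]" by (simp add: idx'_def)
  also have "\<dots> = ws" by (rule map_nth)
  finally have "map idx' [2..<length ws + 2] = ws" .
  then show ?thesis
    by (intro exI[of _ idx']) (simp add: fold_idx idx'_def)
qed

end

theorem lemma2p3:
  fixes al alv :: "'i::finite \<Rightarrow> ('n::finite) lat"
    and b :: "'n lat" and idx :: "nat \<Rightarrow> 'i" and L :: nat
  assumes km: "km_datum al alv"
    and bpos: "b \<in> pos_roots al alv"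
    and L1: "1 \<le> L"
    and bexpr: "b = fold (\<lambda>k. rX al alv (idx k)) [2..<L+1] (al (idx 1))"
    and Lmin: "\<And>L' idx'. 1 \<le> L' \<Longrightarrow>
                 b = fold (\<lambda>k. rX al alv (idx' k)) [2..<L'+1] (al (idx' 1)) \<Longrightarrow> L \<le> L'"
  defines "bt \<equiv> \<lambda>t. fold (\<lambda>k. rX al alv (idx k)) [t+2..<L+1] (al (idx (t+1)))"
    and "gv \<equiv> \<lambda>t. fold (\<lambda>k. rY al alv (idx k)) [2..<t+1] (alv (idx 1))"
  shows "(quantum al alv b
          \<longleftrightarrow> (\<forall>t\<in>{1..L-1}. pair (coroot al alv b) (bt t) = 1))
       \<and> ((\<forall>t\<in>{1..L-1}. pair (coroot al alv b) (bt t) = 1)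
          \<longleftrightarrow> (\<forall>t\<in>{1..L}. gv t = (\<lambda>j. \<Sum>k=1..t. alv (idx k) j)
                  \<and> (2 \<le> t \<longrightarrow> pair (gv (t-1)) (al (idx t)) = -1)))
       \<and> ((\<forall>t\<in>{1..L}. gv t = (\<lambda>j. \<Sum>k=1..t. alv (idx k) j)
                  \<and> (2 \<le> t \<longrightarrow> pair (gv (t-1)) (al (idx t)) = -1))
          \<longleftrightarrow> int (wlen al alv (sref al alv b)) = 2 * ht alv (coroot al alv b) - 1)"
proof -
  interpret K: kmd al alv by (rule kmd.intro) (rule km)
  define i1 where "i1 = idx 1"
  define w where "w = map idx [2..<L+1]"
  have hb: "b = actX al alv w (al i1)" using bexpr by (simp add: fold_idx w_def i1_def)
  have lenw: "length w = L - 1" unfolding w_def length_map length_upt by simp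
  have broot: "b \<in> roots al alv" using bpos unfolding pos_roots_def by auto
  have Lmin': "\<And>ws i. actX al alv ws (al i) = b \<Longrightarrow> L \<le> length ws + 1"
  proof -
    fix ws i assume h: "actX al alv ws (al i) = b"
    obtain idx' where "actX al alv ws (al i) = fold (\<lambda>k. rX al alv (idx' k)) [2..<(length ws + 1) + 1] (al (idx' 1))"
      using K.expr_from_word by blast
    then show "L \<le> length ws + 1" using Lmin[of "length ws + 1" idx'] h by simp
  qed
  define bv where "bv = coroot al alv b"
  have bv: "bv = actY al alv w (alv i1)"
  proof -
    have ex: "\<exists>c. \<exists>ws i. actX al alv ws (al i) = b \<and> c = actY al alv ws (alv i)" using hb by blast
    have "\<exists>ws i. actX al alv ws (al i) = b \<and> bv = actY al alv ws (alv i)"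
      unfolding bv_def coroot_def by (rule someI_ex[OF ex])
    then obtain ws i where "actX al alv ws (al i) = b" "bv = actY al alv ws (alv i)" by blast
    then show ?thesis using K.coroot_wd[of ws i w i1] hb by simp
  qed
  define ws0 where "ws0 = rev w @ [i1] @ w"
  have pbb: "pair bv b = 2" using K.pact[of w "alv i1" "al i1"] by (simp add: bv hb)
  have sform: "\<And>z. actX al alv ws0 z = (\<lambda>j. z j - pair bv z * b j)"
    unfolding ws0_def K.act_formula bv hb ..
  define s where "s = sref al alv b"
  have s: "s = actX al alv ws0"
  proof -
    have ex: "\<exists>f. \<exists>ws i. actX al alv ws (al i) = b \<and> f = actX al alv ws \<circ> rX al alv i \<circ> actX al alv (rev ws)"
      using hb by blast
    have "\<exists>ws i. actX al alv ws (al i) = b \<and> s = actX al alv ws \<circ> rX al alv i \<circ> actX al alv (rev ws)"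
      unfolding s_def sref_def by (rule someI_ex[OF ex])
    then obtain ws i where h: "actX al alv ws (al i) = b" "s = actX al alv ws \<circ> rX al alv i \<circ> actX al alv (rev ws)"
      by blast
    have cv: "actY al alv ws (alv i) = bv" using K.coroot_wd[of ws i w i1] h(1) hb bv by simp
    show ?thesis
    proof (rule ext)
      fix z
      have "s z = actX al alv (rev ws @ [i] @ ws) z" using h(2) by (simp add: actX_append actX_Cons)
      also have "\<dots> = (\<lambda>j. z j - pair bv z * b j)" unfolding K.act_formula cv h(1) ..
      finally show "s z = actX al alv ws0 z" using sform by simp
    qed
  qed
  have sb: "s b = (\<lambda>j. - b j)" using sform[of b] pbb s by simp
  have bneg: "(\<lambda>j. - b j) \<in> neg_roots al alv"
    using K.roots_neg[OF broot] bpos unfolding K.neg_roots_iff K.pos_roots_iff by simp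
  have bnp: "(\<lambda>j. - b j) \<notin> pos_roots al alv" using bneg K.neg_not_pos by blast
  have lws0: "length ws0 = 2 * L - 1" using lenw L1 by (simp add: ws0_def)
  have up: "wlen al alv s \<le> 2 * L - 1" using wlen_le[of al alv ws0] s lws0 by simp
  have low: "2 * L \<le> wlen al alv s + 1"
  proof -
    obtain p where p: "length p = wlen al alv s" "actX al alv p = s"
      using wlen_ex[of al alv ws0] s by auto
    define P where "P = (\<lambda>j. actX al alv (take j p) b \<notin> pos_roots al alv)"
    have Pl: "P (length p)" using p(2) sb bnp by (simp add: P_def)
    define k where "k = (LEAST j. P j)"
    have Pk: "P k" unfolding k_def by (rule LeastI[of P "length p", OF Pl])
    have kl: "k \<le> length p" unfolding k_def by (rule Least_le[of P "length p", OF Pl])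
    have "k \<noteq> 0"
    proof
      assume "k = 0" then show False using Pk bpos by (simp add: P_def)
    qed
    then obtain k' where k': "k = Suc k'" by (cases k) auto
    have nPk': "\<not> P k'" using k' not_less_Least k_def by (metis lessI)
    have k'l: "k' < length p" using kl k' by simp
    define a where "a = p ! k'"
    define z where "z = actX al alv (take k' p) b"
    have zpos: "z \<in> pos_roots al alv" using nPk' by (simp add: P_def z_def)
    have zk: "actX al alv (take k p) b = rX al alv a z"
      using k'l by (simp add: k' take_Suc_conv_app_nth actX_snoc a_def z_def)
    have "rX al alv a z \<in> roots al alv"
      using K.roots_act[OF broot, of "take k p"] zk by simp
    then have "rX al alv a z \<in> neg_roots al alv"
      using K.dichotomy Pk zk by (auto simp: P_def)
    then have za: "z = al a" using K.sign_change zpos by blast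
    have e1: "actX al alv (rev (take k' p)) (al a) = b"
    proof -
      have "actX al alv (rev (take k' p)) z = b" by (simp add: z_def)
      then show ?thesis using za by simp
    qed
    have L1': "L \<le> k' + 1" using Lmin'[OF e1] k'l by simp
    have psplit: "p = take k' p @ [a] @ drop (Suc k') p"
      using k'l by (simp add: a_def id_take_nth_drop)
    have "actX al alv p b = actX al alv (drop (Suc k') p) (rX al alv a z)"
      by (subst psplit) (simp add: actX_append actX_Cons z_def)
    also have "\<dots> = (\<lambda>j. - actX al alv (drop (Suc k') p) (al a) j)"
      by (simp add: za rX_al K.two actX_neg)
    finally have "(\<lambda>j. - actX al alv (drop (Suc k') p) (al a) j) = (\<lambda>j. - b j)"
      using p(2) sb by simp
    then have e2: "actX al alv (drop (Suc k') p) (al a) = b"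
      by (metis (no_types) ext minus_minus)
    have L2': "L \<le> length p - Suc k' + 1" using Lmin'[OF e2] by simp
    show ?thesis using L1' L2' k'l p(1) by simp
  qed
  have wl: "wlen al alv s = 2 * L - 1" using up low by simp
  have ws0min: "length ws0 = wlen al alv (actX al alv ws0)" using wl s lws0 by simp
  have gvY: "\<And>t. gv t = actY al alv (map idx [2..<t+1]) (alv i1)"
    unfolding gv_def by (simp add: fold_idxY i1_def)
  have btX: "\<And>t. bt t = actX al alv (map idx [t+2..<L+1]) (al (idx (t+1)))"
    unfolding bt_def by (simp add: fold_idx)
  have wsplit: "\<And>t. 1 \<le> t \<Longrightarrow> t \<le> L - 1 \<Longrightarrow> w = map idx [2..<t+1] @ [idx (t+1)] @ map idx [t+2..<L+1]"
  proof -
    fix t :: nat assume t: "1 \<le> t" "t \<le> L - 1"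
    have e: "L + 1 = (t + 1) + (L - t)" using t by simp
    have "[2..<L+1] = [2..<t+1] @ [t+1..<L+1]" unfolding e by (rule upt_add_eq_append) (use t in simp)
    moreover have "[t+1..<L+1] = (t+1) # [t+2..<L+1]"
    proof -
      have lt: "t + 1 < L + 1" using t L1 by linarith
      show ?thesis using upt_conv_Cons[OF lt] by simp
    qed
    ultimately show "w = map idx [2..<t+1] @ [idx (t+1)] @ map idx [t+2..<L+1]" by (simp add: w_def)
  qed
  have gvsuc: "\<And>t. 1 \<le> t \<Longrightarrow> gv (t+1) = rY al alv (idx (t+1)) (gv t)"
  proof -
    fix t :: nat assume t: "1 \<le> t"
    have "[2..<t+2] = [2..<t+1] @ [t+1]" using t by simp
    then show "gv (t+1) = rY al alv (idx (t+1)) (gv t)"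
      unfolding gvY by (simp add: actY_is_actX actX_snoc rY_is_rX)
  qed
  have gv1: "gv 1 = alv i1" by (simp add: gvY actY_def)
  have key: "\<And>t. 1 \<le> t \<Longrightarrow> t \<le> L - 1 \<Longrightarrow> pair bv (bt t) = - pair (gv t) (al (idx (t+1)))"
  proof -
    fix t :: nat assume t: "1 \<le> t" "t \<le> L - 1"
    define u where "u = map idx [t+2..<L+1]"
    have "bv = actY al alv (map idx [2..<t+1] @ [idx (t+1)] @ u) (alv i1)"
      unfolding bv u_def by (subst wsplit[OF t]) (rule refl)
    also have "\<dots> = actY al alv u (rY al alv (idx (t+1)) (gv t))"
      by (simp only: actY_def fold_append fold_Cons fold_Nil o_def gvY id_apply)
    also have "\<dots> = actY al alv u (gv (t+1))" using gvsuc[OF t(1)] by simp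
    finally have "bv = actY al alv u (gv (t+1))" .
    then have "pair bv (bt t) = pair (gv (t+1)) (al (idx (t+1)))"
      using K.pact[of u "gv (t+1)" "al (idx (t+1))"] by (simp add: btX u_def)
    also have "\<dots> = - pair (gv t) (al (idx (t+1)))" using gvsuc[OF t(1)] K.prY by simp
    finally show "pair bv (bt t) = - pair (gv t) (al (idx (t+1)))" .
  qed
  define C2 where "C2 = (\<forall>t\<in>{1..L-1}. pair bv (bt t) = 1)"
  define C3 where "C3 = (\<forall>t\<in>{1..L}. gv t = (\<lambda>j. \<Sum>k=1..t. alv (idx k) j)
                  \<and> (2 \<le> t \<longrightarrow> pair (gv (t-1)) (al (idx t)) = -1))"
  define C4 where "C4 = (int (wlen al alv s) = 2 * ht alv bv - 1)"
  have c12: "quantum al alv b \<Longrightarrow> C2"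
  proof -
    assume q: "quantum al alv b"
    then have q1: "\<And>g. g \<in> Inv al alv s - {b} \<Longrightarrow> pair bv g = 1"
      unfolding quantum_def bv_def s_def by blast
    show C2 unfolding C2_def
    proof
      fix t assume "t \<in> {1..L-1}"
      then have t: "1 \<le> t" "t \<le> L - 1" by auto
      define u where "u = map idx [t+2..<L+1]"
      define post where "post = rev (map idx [2..<t+1]) @ [i1] @ w"
      have ws0s: "ws0 = rev u @ [idx (t+1)] @ post"
        unfolding ws0_def post_def u_def by (subst (1) wsplit[OF t]) simp
      have ipn: "actX al alv (rev (rev u)) (al (idx (t+1))) \<in> pos_roots al alv \<and>
             actX al alv ws0 (actX al alv (rev (rev u)) (al (idx (t+1)))) \<in> neg_roots al alv"
        using K.inv_pos_neg[of "rev u" "idx (t+1)" post] ws0min ws0s by simp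
      then have "bt t \<in> Inv al alv s" unfolding Inv_def s btX u_def by simp
      moreover have "bt t \<noteq> b"
      proof
        assume "bt t = b"
        then have "L \<le> length u + 1" using Lmin' btX u_def by metis
        moreover have "length u = L + 1 - (t + 2)" by (simp only: u_def length_map length_upt)
        ultimately show False using t L1 by linarith
      qed
      ultimately show "pair bv (bt t) = 1" using q1 by blast
    qed
  qed
  have c23: "C2 \<Longrightarrow> C3"
  proof -
    assume C2
    then have m1: "\<And>t. 1 \<le> t \<Longrightarrow> t \<le> L - 1 \<Longrightarrow> pair (gv t) (al (idx (t+1))) = -1"
      unfolding C2_def using key by fastforce
    have sumf: "\<And>t. 1 \<le> t \<Longrightarrow> t \<le> L \<Longrightarrow> gv t = (\<lambda>j. \<Sum>k=1..t. alv (idx k) j)"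
    proof -
      fix t :: nat
      show "1 \<le> t \<Longrightarrow> t \<le> L \<Longrightarrow> gv t = (\<lambda>j. \<Sum>k=1..t. alv (idx k) j)"
      proof (induction t)
        case 0 then show ?case by simp
      next
        case (Suc t)
        show ?case
        proof (cases "t = 0")
          case True then show ?thesis using gv1 by (simp add: i1_def)
        next
          case False
          then have t1: "1 \<le> t" "t \<le> L - 1" using Suc.prems by auto
          have "gv (Suc t) = rY al alv (idx (t+1)) (gv t)" using gvsuc[OF t1(1)] by simp
          also have "\<dots> = (\<lambda>j. gv t j + alv (idx (t+1)) j)"
            using m1[OF t1] by (simp add: rY_def)
          also have "\<dots> = (\<lambda>j. \<Sum>k=1..Suc t. alv (idx k) j)"
            using Suc.IH t1 Suc.prems by simp
          finally show ?thesis .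
        qed
      qed
    qed
    show C3 unfolding C3_def
    proof
      fix t assume "t \<in> {1..L}"
      then have t: "1 \<le> t" "t \<le> L" by auto
      have "2 \<le> t \<longrightarrow> pair (gv (t-1)) (al (idx t)) = -1"
      proof
        assume "2 \<le> t"
        then have "1 \<le> t - 1" "t - 1 \<le> L - 1" "t - 1 + 1 = t" using t by auto
        then show "pair (gv (t-1)) (al (idx t)) = -1" using m1 by metis
      qed
      then show "gv t = (\<lambda>j. \<Sum>k=1..t. alv (idx k) j) \<and> (2 \<le> t \<longrightarrow> pair (gv (t-1)) (al (idx t)) = -1)"
        using sumf t by simp
    qed
  qed
  have c32: "C3 \<Longrightarrow> C2"
  proof -
    assume C3
    show C2 unfolding C2_def
    proof
      fix t assume "t \<in> {1..L-1}"
      then have t: "1 \<le> t" "t \<le> L - 1" by auto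
      then have "t + 1 \<in> {1..L}" "2 \<le> t + 1" by auto
      then have "pair (gv t) (al (idx (t+1))) = -1" using \<open>C3\<close> unfolding C3_def by fastforce
      then show "pair bv (bt t) = 1" using key[OF t] by simp
    qed
  qed
  have c34: "C3 \<Longrightarrow> C4"
  proof -
    assume C3
    have "gv L = (\<lambda>j. \<Sum>k=1..L. alv (idx k) j)" using \<open>C3\<close> L1 unfolding C3_def by auto
    moreover have "bv = gv L" by (simp add: bv gvY w_def)
    ultimately have bvs: "bv = (\<lambda>j. \<Sum>k=1..L. alv (idx k) j)" by simp
    define N where "N = (\<lambda>i. \<Sum>k=1..L. (if idx k = i then 1 else 0::int))"
    have "lincomb N alv = (\<lambda>j. \<Sum>k=1..L. alv (idx k) j)"
    proof (rule ext)
      fix j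
      have "lincomb N alv j = (\<Sum>i\<in>UNIV. \<Sum>k=1..L. (if idx k = i then 1 else 0) * alv i j)"
        unfolding lincomb_def N_def by (simp add: sum_distrib_right)
      also have "\<dots> = (\<Sum>i\<in>UNIV. \<Sum>k=1..L. (if idx k = i then alv i j else 0))"
        by (intro sum.cong refl) auto
      also have "\<dots> = (\<Sum>k=1..L. \<Sum>i\<in>UNIV. (if idx k = i then alv i j else 0))" by (rule sum.swap)
      also have "\<dots> = (\<Sum>k=1..L. alv (idx k) j)" by simp
      finally show "lincomb N alv j = (\<Sum>k=1..L. alv (idx k) j)" .
    qed
    then have "ht alv bv = (\<Sum>i\<in>UNIV. N i)" using bvs K.ht_lincomb by metis
    also have "\<dots> = (\<Sum>k=1..L. \<Sum>i\<in>UNIV. (if idx k = i then 1 else 0::int))"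
      unfolding N_def by (rule sum.swap)
    also have "\<dots> = int L" by simp
    finally have "ht alv bv = int L" .
    then show C4 unfolding C4_def using wl L1 by simp
  qed
  have c41: "C4 \<Longrightarrow> quantum al alv b"
  proof -
    assume C4
    obtain N where bvN: "bv = lincomb N alv"
      using kmd.roots_lincomb[OF K.dual, of w i1] by (auto simp: bv actY_is_actX)
    have invs: "Inv al alv s = Inv al alv (actX al alv ws0)" by (simp add: s)
    have fin: "finite (Inv al alv s)" using K.Inv_finite invs by simp
    have card: "card (Inv al alv s) = 2 * L - 1"
      using K.Inv_card_min[OF ws0min] invs lws0 by simp
    have ayws0: "actY al alv ws0 bv = (\<lambda>j. - bv j)"
    proof -
      have "actY al alv ws0 bv = (\<lambda>j. bv j - pair (actX al alv w (al i1)) bv * actY al alv w (alv i1) j)"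
        unfolding ws0_def actY_is_actX kmd.act_formula[OF K.dual] by (simp add: actY_is_actX)
      also have "\<dots> = (\<lambda>j. - bv j)" using pbb by (simp add: hb[symmetric] bv[symmetric] pair_sym[of b])
      finally show ?thesis .
    qed
    have htneg: "ht alv (\<lambda>j. - bv j) = - ht alv bv"
      using K.ht_lincomb[of "\<lambda>i. - N i"] K.ht_lincomb[of N] by (simp add: bvN lincomb_neg sum_negf)
    have sum: "(\<Sum>g\<in>Inv al alv s. pair bv g) = 2 * ht alv bv"
      using K.Inv_sum[of N ws0] invs ayws0 htneg by (simp add: bvN)
    have binv: "b \<in> Inv al alv s" unfolding Inv_def using bpos bneg sb by simp
    have ge1: "\<And>g. g \<in> Inv al alv s \<Longrightarrow> 1 \<le> pair bv g"
    proof (rule ccontr)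
      fix g assume g: "g \<in> Inv al alv s" and "\<not> 1 \<le> pair bv g"
      then have le: "0 \<le> - pair bv g" by simp
      have gp: "g \<in> pos_roots al alv" and gn: "s g \<in> neg_roots al alv" using g unfolding Inv_def by auto
      have sg: "s g = (\<lambda>j. 1 * g j + (- pair bv g) * b j)" using sform[of g] s by simp
      have "nnc al (s g)" unfolding sg
        by (rule K.nnc_comb) (use gp bpos le in \<open>auto simp: K.pos_roots_iff\<close>)
      moreover have "nnc al (\<lambda>j. - s g j)" using gn K.neg_roots_iff by blast
      ultimately have "s g = (\<lambda>_. 0)" using K.nn_both by blast
      moreover have "s g \<in> roots al alv" using gn unfolding neg_roots_def by auto
      ultimately show False using K.roots_nz by blast
    qed
    have sum2: "(\<Sum>g\<in>Inv al alv s - {b}. pair bv g) = 2 * ht alv bv - 2"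
      using sum binv fin pbb by (simp add: sum_diff1)
    have h1: "int (2 * L - 1) = 2 * int L - 1" using L1 by (simp add: of_nat_diff)
    have h2: "int (2 * L - 1 - 1) = 2 * int L - 2" using L1 by (simp add: of_nat_diff)
    have "card (Inv al alv s - {b}) = 2 * L - 1 - 1" using card binv fin by simp
    then have card2: "int (card (Inv al alv s - {b})) = 2 * ht alv bv - 2"
      using h1 h2 \<open>C4\<close> wl unfolding C4_def by simp
    have "(\<Sum>g\<in>Inv al alv s - {b}. pair bv g - 1) = 0"
      using sum2 card2 by (simp add: sum_subtractf)
    then have all1: "\<forall>g\<in>Inv al alv s - {b}. pair bv g - 1 = 0"
    proof -
      have ge0: "\<And>g. g \<in> Inv al alv s - {b} \<Longrightarrow> 0 \<le> pair bv g - 1"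
      proof -
        fix g assume "g \<in> Inv al alv s - {b}"
        then have "1 \<le> pair bv g" using ge1 by blast
        then show "0 \<le> pair bv g - 1" by linarith
      qed
      show ?thesis using \<open>(\<Sum>g\<in>Inv al alv s - {b}. pair bv g - 1) = 0\<close>
        sum_nonneg_eq_0_iff[of "Inv al alv s - {b}" "\<lambda>g. pair bv g - 1"] fin ge0 by simp
    qed
    show "quantum al alv b" unfolding quantum_def using bpos all1
      by (simp add: bv_def[symmetric] s_def[symmetric])
  qed
  have "quantum al alv b \<longleftrightarrow> C2" using c12 c23 c34 c41 by blast
  moreover have "C2 \<longleftrightarrow> C3" using c23 c32 by blast
  moreover have "C3 \<longleftrightarrow> C4" using c34 c41 c12 c23 by blast
  ultimately show ?thesis unfolding C2_def C3_def C4_def bv_def s_def by blast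
qed

end
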